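(* Let $\vec n\in\mathbb{R}^3$ be a unit vector, $\vec\sigma=(\sigma_1,\sigma_2,\sigma_3)$ the Pauli matrices, $J=\vec n\cdot\frac{\vec\sigma}{2}$ and $U_\theta=e^{-i\theta J}$ for $\theta\in\Theta=[0,2\pi)$. Let $\rho=|\psi\rangle\langle\psi|=\frac12\left(I+\vec a\cdot\vec\sigma\right)$ be a pure qubit state with $\|\vec a\|=1$ and $\vec a\cdot\vec n\neq\pm1$, and let $\rho_\theta=U_\theta\rho U_\theta^\dagger$. Let $P_{\pm\frac12}=\frac12(I\pm\vec n\cdot\vec\sigma)$ be the spectral projectors of $J$ for the eigenvalues $\pm\frac12$, and define the POVM on $\Theta$ $$M_*(d\hat\theta)=\frac{d\hat\theta}{2\pi}\sum_{j,k\in\{-\frac12,\frac12\}} e^{i\hat\theta(k-j)}\,\frac{P_j\rho P_k}{\sqrt{\mathrm{Tr}[P_j\rho]\,\mathrm{Tr}[P_k\rho]}}.$$ Then for every POVM $M$ with outcomes in $\Theta$ that is covariant with respect to $\{U_\theta\}_{\theta\in\Theta}$, $$F(\theta;M)\le F(\theta;M_* ).$$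
   Context: $\Theta=[0,2\pi)$ is regarded as the group of addition modulo $2\pi$, acting on itself, with unitary representation $\theta\mapsto U_\theta$ on $\mathbb{C}^2$. A POVM $M$ with outcomes in $\Theta$ is a family of positive operators $M(B)$ indexed by Borel sets $B\subseteq\Theta$, countably additive, with $M(\Theta)=I$. It is covariant with respect to $\{U_g\}$ if $M(B g^{-1})=U_g^\dagger M(B)U_g$ for all Borel $B$ and all $g\in\Theta$, where $Bg^{-1}=\{\theta: \theta= g+\theta' \bmod 2\pi,\ \theta'\in B\}$. Given the state $\rho_\theta$, the outcome distribution is $p(d\hat\theta\mid\theta)=\mathrm{Tr}[M(d\hat\theta)\rho_\theta]$, and the (classical) Fisher information of $M$ at $\theta$ is $F(\theta;M)=\int_\Theta \left(\partial_\theta \log p(\hat\theta\mid\theta)\right)^2 p(d\hat\theta\mid\theta)$, where $p(\hat\theta\mid\theta)$ is the density of $p(d\hat\theta\mid\theta)$. *)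

theory Defs
  imports "HOL-Analysis.Analysis"
begin

type_synonym cmat = "complex^2^2"

definition smat :: "complex \<Rightarrow> cmat \<Rightarrow> cmat" where
  "smat c A = (\<chi> i j. c * A$i$j)"

definition adj :: "cmat \<Rightarrow> cmat" where
  "adj A = (\<chi> i j. cnj (A$j$i))"

fun mpow :: "cmat \<Rightarrow> nat \<Rightarrow> cmat" where
  "mpow A 0 = mat 1"
| "mpow A (Suc k) = A ** mpow A k"

definition mexp :: "cmat \<Rightarrow> cmat" where
  "mexp A = (\<Sum>k. smat (1 / of_nat (fact k)) (mpow A k))"

definition psd :: "cmat \<Rightarrow> bool" where
  "psd A \<longleftrightarrow> (\<forall>v::complex^2. let q = (\<Sum>i\<in>UNIV. cnj (v$i) * (A *v v)$i)
                                  in Im q = 0 \<and> Re q \<ge> 0)"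

definition sigma1 :: cmat where
  "sigma1 = (\<chi> i j. if i = j then 0 else 1)"
definition sigma2 :: cmat where
  "sigma2 = (\<chi> i j. if i = j then 0 else if i = 1 then - \<i> else \<i>)"
definition sigma3 :: cmat where
  "sigma3 = (\<chi> i j. if i \<noteq> j then 0 else if i = 1 then 1 else -1)"

definition pauli_dot :: "real^3 \<Rightarrow> cmat" where
  "pauli_dot v = smat (of_real (v$1)) sigma1 + smat (of_real (v$2)) sigma2
                 + smat (of_real (v$3)) sigma3"

definition Jop :: "real^3 \<Rightarrow> cmat" where
  "Jop n = smat (1/2) (pauli_dot n)"

definition Uop :: "real^3 \<Rightarrow> real \<Rightarrow> cmat" where
  "Uop n \<theta> = mexp (smat (- \<i> * of_real \<theta>) (Jop n))"

definition bloch :: "real^3 \<Rightarrow> cmat" where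
  "bloch a = smat (1/2) (mat 1 + pauli_dot a)"

definition rho_t :: "real^3 \<Rightarrow> real^3 \<Rightarrow> real \<Rightarrow> cmat" where
  "rho_t n a \<theta> = Uop n \<theta> ** bloch a ** adj (Uop n \<theta>)"

text \<open>Spectral projectors \<open>P_{\<plusminus>1/2} = (I \<plusminus> n\<cdot>\<sigma>)/2\<close>, indexed by the eigenvalue j.\<close>
definition Proj :: "real^3 \<Rightarrow> real \<Rightarrow> cmat" where
  "Proj n j = (if j = 1/2 then smat (1/2) (mat 1 + pauli_dot n)
               else smat (1/2) (mat 1 - pauli_dot n))"

definition Theta :: "real set" where
  "Theta = {0..<2*pi}"

definition is_povm :: "(real set \<Rightarrow> cmat) \<Rightarrow> bool" where
  "is_povm M \<longleftrightarrow>
     (\<forall>B. B \<in> sets borel \<and> B \<subseteq> Theta \<longrightarrow> psd (M B)) \<and>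
     M Theta = mat 1 \<and>
     (\<forall>A::nat \<Rightarrow> real set. (\<forall>k. A k \<in> sets borel \<and> A k \<subseteq> Theta) \<and> disjoint_family A
        \<longrightarrow> (\<lambda>k. M (A k)) sums M (\<Union>k. A k))"

text \<open>\<open>B g\<^sup>-\<^sup>1 = {\<theta>. \<theta> = g + \<theta>' mod 2\<pi>, \<theta>' \<in> B}\<close>\<close>
definition shift_set :: "real \<Rightarrow> real set \<Rightarrow> real set" where
  "shift_set g B = {\<theta> \<in> Theta. \<exists>\<theta>'\<in>B. \<exists>k::int. \<theta> = g + \<theta>' + 2 * pi * of_int k}"

definition covariant :: "real^3 \<Rightarrow> (real set \<Rightarrow> cmat) \<Rightarrow> bool" where
  "covariant n M \<longleftrightarrow>
     (\<forall>B g. B \<in> sets borel \<and> B \<subseteq> Theta \<and> g \<in> Theta \<longrightarrow>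
        M (shift_set g B) = adj (Uop n g) ** M B ** Uop n g)"

definition is_density ::
  "real^3 \<Rightarrow> real^3 \<Rightarrow> (real set \<Rightarrow> cmat) \<Rightarrow> (real \<Rightarrow> real \<Rightarrow> real) \<Rightarrow> bool" where
  "is_density n a M p \<longleftrightarrow>
     (\<forall>t. (\<forall>x\<in>Theta. p t x \<ge> 0) \<and> set_integrable lborel Theta (p t) \<and>
          (\<forall>B. B \<in> sets borel \<and> B \<subseteq> Theta \<longrightarrow>
               trace (M B ** rho_t n a t) = complex_of_real (LINT x:B|lborel. p t x)))"

definition diff_density :: "(real \<Rightarrow> real \<Rightarrow> real) \<Rightarrow> real \<Rightarrow> bool" where
  "diff_density p \<theta> \<longleftrightarrow> (AE x in lborel. x \<in> Theta \<longrightarrow> (\<lambda>t. p t x) differentiable (at \<theta>))"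

text \<open>Classical Fisher information \<open>\<integral> (\<partial>\<^sub>\<theta> log p)\<^sup>2 p = \<integral> (\<partial>\<^sub>\<theta> p)\<^sup>2 / p\<close>.\<close>
definition fisher :: "(real \<Rightarrow> real \<Rightarrow> real) \<Rightarrow> real \<Rightarrow> ennreal" where
  "fisher p \<theta> = (\<integral>\<^sup>+ x \<in> Theta. ennreal ((deriv (\<lambda>t. p t x) \<theta>)\<^sup>2 / p \<theta> x) \<partial>lborel)"

definition Mstar_dens :: "real^3 \<Rightarrow> real^3 \<Rightarrow> real \<Rightarrow> cmat" where
  "Mstar_dens n a x = smat (1 / (2 * of_real pi))
     (\<Sum>j\<in>{-1/2, 1/2::real}. \<Sum>k\<in>{-1/2, 1/2::real}.
        smat (exp (\<i> * of_real (x * (k - j)))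
              / of_real (sqrt (Re (trace (Proj n j ** bloch a)) * Re (trace (Proj n k ** bloch a)))))
             (Proj n j ** bloch a ** Proj n k))"

definition Mstar :: "real^3 \<Rightarrow> real^3 \<Rightarrow> real set \<Rightarrow> cmat" where
  "Mstar n a B = (LINT x:B|lborel. Mstar_dens n a x)"

end

theory Submission
  imports Defs "HOL-Real_Asymp.Real_Asymp"
begin

lemma norm3: "norm (v::real^3) = sqrt ((v$1)^2 + (v$2)^2 + (v$3)^2)"
  by (simp add: norm_vec_def L2_set_def sum_3)

lemma inner3: "inner (v::real^3) w = v$1*w$1 + v$2*w$2 + v$3*w$3"
  by (simp add: inner_vec_def sum_3)

lemma unit3: "norm (v::real^3) = 1 \<Longrightarrow> (v$1)^2 + (v$2)^2 + (v$3)^2 = 1"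
  by (simp add: norm3)

lemma cmat_eqI: "(A::cmat)$1$1 = B$1$1 \<Longrightarrow> A$1$2 = B$1$2 \<Longrightarrow> A$2$1 = B$2$1 \<Longrightarrow> A$2$2 = B$2$2 \<Longrightarrow> A = B"
  by (simp add: vec_eq_iff forall_2)

lemma mult_entries:
  "((A::cmat) ** B)$i$j = A$i$1 * B$1$j + A$i$2 * B$2$j"
  by (simp add: matrix_matrix_mult_def sum_2)

lemma pauli_entries:
  "pauli_dot v $1$1 = of_real (v$3)"
  "pauli_dot v $1$2 = of_real (v$1) - \<i> * of_real (v$2)"
  "pauli_dot v $2$1 = of_real (v$1) + \<i> * of_real (v$2)"
  "pauli_dot v $2$2 = - of_real (v$3)"
  by (simp_all add: pauli_dot_def smat_def sigma1_def sigma2_def sigma3_def)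

lemma mat1_entries: "(mat 1::cmat)$1$1 = 1" "(mat 1::cmat)$1$2 = 0" "(mat 1::cmat)$2$1 = 0" "(mat 1::cmat)$2$2 = 1"
  by (simp_all add: mat_def)

lemma smat_entry: "smat c A $i$j = c * A$i$j" by (simp add: smat_def)

lemmas ent = mult_entries pauli_entries mat1_entries smat_entry


definition Pp :: "real^3 \<Rightarrow> cmat" where "Pp n = Proj n (1/2)"
definition Pm :: "real^3 \<Rightarrow> cmat" where "Pm n = Proj n (-1/2)"

lemma Pp_entries:
  "Pp n $1$1 = (1 + of_real (n$3))/2" "Pp n $1$2 = (of_real (n$1) - \<i> * of_real (n$2))/2"
  "Pp n $2$1 = (of_real (n$1) + \<i> * of_real (n$2))/2" "Pp n $2$2 = (1 - of_real (n$3))/2"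
  by (simp_all add: Pp_def Proj_def ent)
lemma Pm_entries:
  "Pm n $1$1 = (1 - of_real (n$3))/2" "Pm n $1$2 = - (of_real (n$1) - \<i> * of_real (n$2))/2"
  "Pm n $2$1 = - (of_real (n$1) + \<i> * of_real (n$2))/2" "Pm n $2$2 = (1 + of_real (n$3))/2"
  by (simp_all add: Pm_def Proj_def ent)
lemma rho_entries:
  "bloch a $1$1 = (1 + of_real (a$3))/2" "bloch a $1$2 = (of_real (a$1) - \<i> * of_real (a$2))/2"
  "bloch a $2$1 = (of_real (a$1) + \<i> * of_real (a$2))/2" "bloch a $2$2 = (1 - of_real (a$3))/2"
  by (simp_all add: bloch_def ent)

lemma zero_entries: "(0::cmat)$i$j = 0" by simp
lemma add_entries: "((A::cmat) + B)$i$j = A$i$j + B$i$j" by simp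
lemma adj_entries: "adj A $i$j = cnj (A$j$i)" by (simp add: adj_def)

lemmas E = ent Pp_entries Pm_entries rho_entries add_entries adj_entries

lemma PpPm_sum: "Pp n + Pm n = mat 1"
  by (rule cmat_eqI) (simp_all add: E complex_eq_iff field_simps)

lemma adj_Pp: "adj (Pp n) = Pp n" by (rule cmat_eqI) (simp_all add: E complex_eq_iff)
lemma adj_Pm: "adj (Pm n) = Pm n" by (rule cmat_eqI) (simp_all add: E complex_eq_iff)
lemma adj_rho: "adj (bloch a) = bloch a" by (rule cmat_eqI) (simp_all add: E complex_eq_iff)

context fixes n :: "real^3" assumes un: "norm n = 1" begin
lemma un': "n$1*n$1 + n$2*n$2 + n$3*n$3 = 1" using unit3[OF un] by (simp add: power2_eq_square)
lemma PpPp: "Pp n ** Pp n = Pp n"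
  apply (rule cmat_eqI) apply (simp_all add: E complex_eq_iff field_simps) apply (use un' in algebra)+ done
lemma PmPm: "Pm n ** Pm n = Pm n"
  apply (rule cmat_eqI) apply (simp_all add: E complex_eq_iff field_simps) apply (use un' in algebra)+ done
lemma PpPm: "Pp n ** Pm n = 0"
  apply (rule cmat_eqI) apply (simp_all add: E complex_eq_iff field_simps) apply (use un' in algebra)+ done
lemma PmPp: "Pm n ** Pp n = 0"
  apply (rule cmat_eqI) apply (simp_all add: E complex_eq_iff field_simps) apply (use un' in algebra)+ done
end

context fixes a :: "real^3" assumes ua: "norm a = 1" begin
lemma ua': "a$1*a$1 + a$2*a$2 + a$3*a$3 = 1" using unit3[OF ua] by (simp add: power2_eq_square)
lemma rho_idem: "bloch a ** bloch a = bloch a"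
  apply (rule cmat_eqI) apply (simp_all add: E complex_eq_iff field_simps) apply (use ua' in algebra)+ done
lemma rho_sandwich: "bloch a ** X ** bloch a = smat (trace (X ** bloch a)) (bloch a)"
  apply (rule cmat_eqI) apply (simp_all add: E trace_def sum_2 complex_eq_iff field_simps) apply (use ua' in algebra)+ done
end

lemma trace_Pp_rho: "trace (Pp n ** bloch a) = (1 + inner a n)/2"
  by (simp add: trace_def sum_2 E inner3 complex_eq_iff field_simps) 
lemma trace_Pm_rho: "trace (Pm n ** bloch a) = (1 - inner a n)/2"
  by (simp add: trace_def sum_2 E inner3 complex_eq_iff field_simps) 

lemma smat_mult_left: "smat c A ** B = smat c (A ** B)"
  by (simp add: smat_def matrix_matrix_mult_def vec_eq_iff sum_distrib_left mult.assoc)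
lemma smat_mult_right: "A ** smat c B = smat c (A ** B)"
  by (simp add: smat_def matrix_matrix_mult_def vec_eq_iff sum_distrib_left mult.assoc mult.left_commute)
lemma smat_smat: "smat c (smat d A) = smat (c*d) A"
  by (simp add: smat_def vec_eq_iff mult.assoc)
lemma smat_add_right: "smat c (A + B) = smat c A + smat c B"
  by (simp add: smat_def vec_eq_iff algebra_simps)
lemma smat_add_left: "smat (c + d) A = smat c A + smat d A"
  by (simp add: smat_def vec_eq_iff algebra_simps)
lemma smat_one[simp]: "smat 1 A = A" by (simp add: smat_def vec_eq_iff)
lemma smat_zero[simp]: "smat 0 A = 0" by (simp add: smat_def vec_eq_iff)
lemma smat_zero_mat[simp]: "smat c 0 = 0" by (simp add: smat_def vec_eq_iff)
lemma matrix_add_rdistrib': "((B + C) ** (A::cmat)) = (B ** A) + (C ** A)"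
  by (simp add: matrix_matrix_mult_def vec_eq_iff sum.distrib[symmetric] algebra_simps)
lemma adj_mult: "adj (A ** B) = adj B ** adj A"
  by (simp add: adj_def matrix_matrix_mult_def vec_eq_iff mult.commute)
lemma adj_smat: "adj (smat c A) = smat (cnj c) (adj A)"
  by (simp add: adj_def smat_def vec_eq_iff)
lemma adj_add: "adj (A + B) = adj A + adj B"
  by (simp add: adj_def vec_eq_iff)
lemma trace_smat: "trace (smat c A) = c * trace A"
  by (simp add: trace_def smat_def sum_distrib_left)
lemma smat_sum: "(\<Sum>k\<in>S. smat (f k) X) = smat (sum f S) X"
  by (induction S rule: infinite_finite_induct) (simp_all add: smat_add_left)

lemma smat_sums: assumes "f sums S" shows "(\<lambda>k. smat (f k) X) sums smat S X"
proof -
  have "(\<lambda>N. smat (\<Sum>k<N. f k) X) \<longlonglongrightarrow> smat S X"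
    unfolding smat_def
    by (intro tendsto_vec_lambda tendsto_mult_right) (use assms in \<open>simp add: sums_def\<close>)
  then show ?thesis by (simp add: sums_def smat_sum)
qed

lemma Jop_PP: "Jop n = smat (1/2) (Pp n) + smat (-1/2) (Pm n)"
  by (rule cmat_eqI) (simp_all add: E Jop_def field_simps)

context fixes n :: "real^3" assumes un: "norm n = 1" begin

lemma mpow_PP: "mpow (smat x (Pp n) + smat y (Pm n)) k = smat (x^k) (Pp n) + smat (y^k) (Pm n)"
proof (induction k)
  case 0
  then show ?case using PpPm_sum by simp
next
  case (Suc k)
  show ?case
    by (simp add: Suc matrix_add_ldistrib matrix_add_rdistrib' smat_mult_left smat_mult_right
        PpPp[OF un] PmPm[OF un] PpPm[OF un] PmPp[OF un] smat_smat mult.commute)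
qed

lemma mexp_PP: "mexp (smat x (Pp n) + smat y (Pm n)) = smat (exp x) (Pp n) + smat (exp y) (Pm n)"
proof -
  have ex: "(\<lambda>k. 1 / of_nat (fact k) * z^k) sums exp z" for z :: complex
    using exp_converges[of z] by (simp add: scaleR_conv_of_real divide_inverse mult.commute)
  have 1: "(\<lambda>k. smat (1 / of_nat (fact k)) (mpow (smat x (Pp n) + smat y (Pm n)) k))
        = (\<lambda>k. smat (1 / of_nat (fact k) * x^k) (Pp n) + smat (1 / of_nat (fact k) * y^k) (Pm n))"
    unfolding mpow_PP smat_add_right smat_smat by (rule refl)
  have 2: "(\<lambda>k. smat (1 / of_nat (fact k) * x^k) (Pp n) + smat (1 / of_nat (fact k) * y^k) (Pm n))
       sums (smat (exp x) (Pp n) + smat (exp y) (Pm n))"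
    by (intro sums_add smat_sums ex)
  show ?thesis unfolding mexp_def 1 by (rule sums_unique[OF 2, symmetric])
qed

lemma Uop_PP: "Uop n t = smat (exp (- \<i> * of_real t / 2)) (Pp n) + smat (exp (\<i> * of_real t / 2)) (Pm n)"
proof -
  have e: "- \<i> * of_real t * (1/2) = - \<i> * of_real t / 2" "- \<i> * of_real t * (-1/2) = \<i> * of_real t / 2"
    by simp_all
  have 1: "smat (- \<i> * of_real t) (Jop n) = smat (- \<i> * of_real t / 2) (Pp n) + smat (\<i> * of_real t / 2) (Pm n)"
    unfolding Jop_PP smat_add_right smat_smat e by (rule refl)
  have "Uop n t = mexp (smat (- \<i> * of_real t) (Jop n))" unfolding Uop_def by (rule refl)
  also have "\<dots> = mexp (smat (- \<i> * of_real t / 2) (Pp n) + smat (\<i> * of_real t / 2) (Pm n))" unfolding 1 by (rule refl)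
  also have "\<dots> = smat (exp (- \<i> * of_real t / 2)) (Pp n) + smat (exp (\<i> * of_real t / 2)) (Pm n)" by (rule mexp_PP)
  finally show ?thesis .
qed

end

abbreviation Xpp where "Xpp n a \<equiv> Pp n ** bloch a ** Pp n"
abbreviation Xmm where "Xmm n a \<equiv> Pm n ** bloch a ** Pm n"
abbreviation Xpm where "Xpm n a \<equiv> Pp n ** bloch a ** Pm n"
abbreviation Xmp where "Xmp n a \<equiv> Pm n ** bloch a ** Pp n"

lemma adj_adj: "adj (adj A) = A" by (simp add: adj_def vec_eq_iff)

lemma trace_cov: "trace ((adj U ** Mb ** U) ** X) = trace (Mb ** (U ** X ** adj U))"
proof -
  have "trace ((adj U ** Mb ** U) ** X) = trace (adj U ** (Mb ** (U ** X)))"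
    by (simp add: matrix_mul_assoc)
  also have "\<dots> = trace ((Mb ** (U ** X)) ** adj U)" by (rule trace_mul_sym)
  also have "\<dots> = trace (Mb ** (U ** X ** adj U))" by (simp add: matrix_mul_assoc)
  finally show ?thesis .
qed

context fixes n :: "real^3" assumes un: "norm n = 1" begin

lemma adjU: "adj (Uop n t) = smat (exp (\<i> * of_real t / 2)) (Pp n) + smat (exp (- \<i> * of_real t / 2)) (Pm n)"
  by (simp add: Uop_PP[OF un] adj_add adj_smat adj_Pp adj_Pm exp_cnj)

lemma U_Pp: "Uop n t ** Pp n = smat (exp (- \<i> * of_real t / 2)) (Pp n)"
  by (simp add: Uop_PP[OF un] matrix_add_rdistrib' smat_mult_left PpPp[OF un] PmPp[OF un])
lemma U_Pm: "Uop n t ** Pm n = smat (exp (\<i> * of_real t / 2)) (Pm n)"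
  by (simp add: Uop_PP[OF un] matrix_add_rdistrib' smat_mult_left PmPm[OF un] PpPm[OF un])
lemma Pp_adjU: "Pp n ** adj (Uop n t) = smat (exp (\<i> * of_real t / 2)) (Pp n)"
  by (simp add: adjU matrix_add_ldistrib smat_mult_right PpPp[OF un] PpPm[OF un])
lemma Pm_adjU: "Pm n ** adj (Uop n t) = smat (exp (- \<i> * of_real t / 2)) (Pm n)"
  by (simp add: adjU matrix_add_ldistrib smat_mult_right PmPm[OF un] PmPp[OF un])

lemma sand_gen:
  assumes "U ** P = smat c P" "Q ** adj U = smat d Q"
  shows "U ** (P ** Y ** Q) ** adj U = smat (c*d) (P ** Y ** Q)"
proof -
  have "U ** (P ** Y ** Q) ** adj U = (U ** P) ** Y ** (Q ** adj U)" by (simp add: matrix_mul_assoc)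
  also have "\<dots> = smat (c*d) (P ** Y ** Q)"
    by (simp add: assms smat_mult_left smat_mult_right smat_smat mult.commute)
  finally show ?thesis .
qed

lemma sand_pp: "Uop n t ** (Pp n ** Y ** Pp n) ** adj (Uop n t) = Pp n ** Y ** Pp n"
proof -
  have "exp (- \<i> * of_real t / 2) * exp (\<i> * of_real t / 2) = 1" by (simp add: mult_exp_exp)
  then show ?thesis using sand_gen[OF U_Pp Pp_adjU] by simp
qed
lemma sand_mm: "Uop n t ** (Pm n ** Y ** Pm n) ** adj (Uop n t) = Pm n ** Y ** Pm n"
proof -
  have "exp (\<i> * of_real t / 2) * exp (- \<i> * of_real t / 2) = 1" by (simp add: mult_exp_exp)
  then show ?thesis using sand_gen[OF U_Pm Pm_adjU] by simp
qed
lemma sand_pm: "Uop n t ** (Pp n ** Y ** Pm n) ** adj (Uop n t) = smat (exp (- \<i> * of_real t)) (Pp n ** Y ** Pm n)"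
proof -
  have "exp (- \<i> * of_real t / 2) * exp (- \<i> * of_real t / 2) = exp (- \<i> * of_real t)"
    by (simp add: mult_exp_exp)
  then show ?thesis using sand_gen[OF U_Pp Pm_adjU] by simp
qed
lemma sand_mp: "Uop n t ** (Pm n ** Y ** Pp n) ** adj (Uop n t) = smat (exp (\<i> * of_real t)) (Pm n ** Y ** Pp n)"
proof -
  have "exp (\<i> * of_real t / 2) * exp (\<i> * of_real t / 2) = exp (\<i> * of_real t)"
    by (simp add: mult_exp_exp)
  then show ?thesis using sand_gen[OF U_Pm Pp_adjU] by simp
qed

lemma decomp: "Y = Pp n ** Y ** Pp n + Pm n ** Y ** Pm n + Pp n ** Y ** Pm n + Pm n ** Y ** Pp n"
proof -
  have "Y = (Pp n + Pm n) ** Y ** (Pp n + Pm n)" by (simp add: PpPm_sum)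
  also have "\<dots> = Pp n ** Y ** Pp n + Pm n ** Y ** Pm n + Pp n ** Y ** Pm n + Pm n ** Y ** Pp n"
    by (simp add: matrix_add_ldistrib matrix_add_rdistrib' algebra_simps)
  finally show ?thesis .
qed

lemma U_conj_decomp:
  "Uop n t ** Y ** adj (Uop n t) = Pp n ** Y ** Pp n + Pm n ** Y ** Pm n
     + smat (exp (- \<i> * of_real t)) (Pp n ** Y ** Pm n) + smat (exp (\<i> * of_real t)) (Pm n ** Y ** Pp n)"
proof -
  have "Uop n t ** Y ** adj (Uop n t) = Uop n t ** (Pp n ** Y ** Pp n + Pm n ** Y ** Pm n + Pp n ** Y ** Pm n + Pm n ** Y ** Pp n) ** adj (Uop n t)"
    using decomp[of Y] by simp
  also have "\<dots> = Uop n t ** (Pp n ** Y ** Pp n) ** adj (Uop n t) + Uop n t ** (Pm n ** Y ** Pm n) ** adj (Uop n t)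
     + Uop n t ** (Pp n ** Y ** Pm n) ** adj (Uop n t) + Uop n t ** (Pm n ** Y ** Pp n) ** adj (Uop n t)"
    by (simp add: matrix_add_ldistrib matrix_add_rdistrib')
  finally show ?thesis by (simp only: sand_pp sand_mm sand_pm sand_mp)
qed

lemma rho_t_decomp:
  "rho_t n a t = Xpp n a + Xmm n a + smat (exp (- \<i> * of_real t)) (Xpm n a) + smat (exp (\<i> * of_real t)) (Xmp n a)"
  unfolding rho_t_def by (rule U_conj_decomp)

end

lemma psd_trace:
  assumes "psd Mb"
  shows "Im (trace (Mb ** (W ** adj W))) = 0 \<and> Re (trace (Mb ** (W ** adj W))) \<ge> 0"
proof -
  define q where "q v = (\<Sum>i\<in>UNIV. cnj (v$i) * (Mb *v v)$i)" for v :: "complex^2"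
  have q: "Im (q v) = 0 \<and> Re (q v) \<ge> 0" for v
    using assms unfolding psd_def q_def Let_def by blast
  have "trace (Mb ** (W ** adj W)) = q (\<chi> i. W$i$1) + q (\<chi> i. W$i$2)"
    unfolding q_def trace_def by (simp add: sum_2 matrix_matrix_mult_def matrix_vector_mult_def adj_def algebra_simps)
  then show ?thesis using q[of "\<chi> i. W$i$1"] q[of "\<chi> i. W$i$2"] by simp
qed

lemma cs_scalar:
  fixes A B C D :: complex
  assumes h: "\<And>l::complex. Im (l*cnj l*A + l*C + cnj l*D + B) = 0 \<and> Re (l*cnj l*A + l*C + cnj l*D + B) \<ge> 0"
  shows "Im A = 0 \<and> Im B = 0 \<and> Re A \<ge> 0 \<and> Re B \<ge> 0 \<and> D = cnj C \<and> (cmod C)^2 \<le> Re A * Re B"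
proof -
  have h0: "Im B = 0" "Re B \<ge> 0" using h[of 0] by auto
  have h1: "Im (A + C + D + B) = 0" "Re (A + C + D + B) \<ge> 0" using h[of 1] by auto
  have hm1: "Im (A - C - D + B) = 0" "Re (A - C - D + B) \<ge> 0" using h[of "-1"] by auto
  have hi: "Im (A + \<i>*C - \<i>*D + B) = 0" using h[of "\<i>"] by (auto simp: algebra_simps)
  have ImA: "Im A = 0" using h0 h1 hm1 by simp
  have D: "D = cnj C" using ImA h0 h1 hi by (simp add: complex_eq_iff)
  have real_tau: "\<tau>^2 * Re A + 2 * \<tau> * Re C + Re B \<ge> 0" for \<tau> :: real
    using h[of "of_real \<tau>"] D by (simp add: power2_eq_square algebra_simps)
  have ReA: "Re A \<ge> 0"
  proof (rule ccontr)
    assume "\<not> Re A \<ge> 0"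
    then have neg: "Re A < 0" by simp
    define \<tau> where "\<tau> = sqrt ((Re B + 1) / (- Re A))"
    have nn: "(Re B + 1) / (- Re A) \<ge> 0" using neg h0 by (intro divide_nonneg_pos) auto
    have t2: "\<tau>^2 = (Re B + 1) / (- Re A)" unfolding \<tau>_def using nn by (simp only: real_sqrt_pow2)
    have "\<tau>^2 * Re A + Re B = -1" using neg by (simp add: t2 field_simps)
    moreover have "\<tau>^2 * Re A + 2 * \<tau> * Re C + Re B \<ge> 0" "(-\<tau>)^2 * Re A + 2 * (-\<tau>) * Re C + Re B \<ge> 0"
      using real_tau by blast+
    ultimately show False by simp
  qed
  have gen: "\<tau>^2 * (cmod C)^2 * Re A - 2 * \<tau> * (cmod C)^2 + Re B \<ge> 0" for \<tau> :: real
  proof -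
    have "Re ((- of_real \<tau> * cnj C) * cnj (- of_real \<tau> * cnj C) * A + (- of_real \<tau> * cnj C) * C + cnj (- of_real \<tau> * cnj C) * D + B) \<ge> 0"
      using h by blast
    moreover have cm: "(cmod C)^2 = (Re C)^2 + (Im C)^2" by (rule cmod_power2)
    ultimately show ?thesis unfolding cm using D ImA by (simp add: power2_eq_square algebra_simps)
  qed
  have CS: "(cmod C)^2 \<le> Re A * Re B"
  proof (cases "Re A = 0")
    case True
    show ?thesis
    proof (rule ccontr)
      assume "\<not> ?thesis"
      then have pos: "(cmod C)^2 > 0" using True by simp
      define \<tau> where "\<tau> = (Re B + 1) / (2 * (cmod C)^2)"
      have t1: "\<tau> * (cmod C)^2 = (Re B + 1)/2" using pos unfolding \<tau>_def by (simp add: field_simps)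
      have "\<tau>^2 * (cmod C)^2 * Re A - 2*\<tau>*(cmod C)^2 + Re B \<ge> 0" by (rule gen)
      then have "- 2 * (\<tau> * (cmod C)^2) + Re B \<ge> 0" using True by (simp add: algebra_simps)
      then show False unfolding t1 by (simp add: field_simps)
    qed
  next
    case False
    then have pos: "Re A > 0" using ReA by simp
    have "(1 / Re A)^2 * (cmod C)^2 * Re A - 2 * (1 / Re A) * (cmod C)^2 + Re B \<ge> 0" by (rule gen)
    then have "Re B - (cmod C)^2 / Re A \<ge> 0" using pos by (simp add: power2_eq_square field_simps)
    then show ?thesis using pos by (simp add: field_simps)
  qed
  show ?thesis using ImA h0 ReA D CS by simp
qed

context fixes n a :: "real^3" assumes un: "norm n = 1" and ua: "norm a = 1" begin

lemma W_sq: "((smat l (Pp n) + Pm n) ** bloch a) ** adj ((smat l (Pp n) + Pm n) ** bloch a)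
   = smat (l * cnj l) (Xpp n a) + smat l (Xpm n a) + smat (cnj l) (Xmp n a) + Xmm n a"
proof -
  have "adj ((smat l (Pp n) + Pm n) ** bloch a) = bloch a ** (smat (cnj l) (Pp n) + Pm n)"
    by (simp add: adj_mult adj_add adj_smat adj_Pp adj_Pm adj_rho)
  then have "((smat l (Pp n) + Pm n) ** bloch a) ** adj ((smat l (Pp n) + Pm n) ** bloch a)
     = (smat l (Pp n) + Pm n) ** (bloch a ** bloch a) ** (smat (cnj l) (Pp n) + Pm n)"
    by (simp add: matrix_mul_assoc)
  also have "\<dots> = (smat l (Pp n) + Pm n) ** bloch a ** (smat (cnj l) (Pp n) + Pm n)"
    by (simp add: rho_idem[OF ua])
  also have "\<dots> = smat (l * cnj l) (Xpp n a) + smat l (Xpm n a) + smat (cnj l) (Xmp n a) + Xmm n a"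
    by (simp add: matrix_add_ldistrib matrix_add_rdistrib' smat_mult_left smat_mult_right smat_smat
        smat_add_right algebra_simps)
  finally show ?thesis .
qed

lemma trace_lin: "trace (Mb ** (smat c X + Y)) = c * trace (Mb ** X) + trace (Mb ** Y)"
  by (simp add: matrix_add_ldistrib smat_mult_right trace_add trace_smat)

lemma psd_cs:
  assumes "psd Mb"
  defines "A \<equiv> trace (Mb ** Xpp n a)" and "B \<equiv> trace (Mb ** Xmm n a)"
      and "C \<equiv> trace (Mb ** Xpm n a)" and "D \<equiv> trace (Mb ** Xmp n a)"
  shows "Im A = 0 \<and> Im B = 0 \<and> Re A \<ge> 0 \<and> Re B \<ge> 0 \<and> D = cnj C \<and> (cmod C)^2 \<le> Re A * Re B"
proof (rule cs_scalar)
  fix l :: complex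
  have "trace (Mb ** (((smat l (Pp n) + Pm n) ** bloch a) ** adj ((smat l (Pp n) + Pm n) ** bloch a)))
     = l * cnj l * A + l * C + cnj l * D + B"
    unfolding W_sq A_def B_def C_def D_def
    by (simp add: matrix_add_ldistrib smat_mult_right trace_add trace_smat)
  then show "Im (l*cnj l*A + l*C + cnj l*D + B) = 0 \<and> Re (l*cnj l*A + l*C + cnj l*D + B) \<ge> 0"
    using psd_trace[OF assms(1)] by metis
qed

end

lemma trace_cov_pp:
  assumes un: "norm n = 1"
  shows "trace ((adj (Uop n g) ** Mb ** Uop n g) ** Xpp n a) = trace (Mb ** Xpp n a)"
  by (simp add: trace_cov sand_pp[OF un])
lemma trace_cov_mm:
  assumes un: "norm n = 1"
  shows "trace ((adj (Uop n g) ** Mb ** Uop n g) ** Xmm n a) = trace (Mb ** Xmm n a)"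
  by (simp add: trace_cov sand_mm[OF un])
lemma trace_cov_pm:
  assumes un: "norm n = 1"
  shows "trace ((adj (Uop n g) ** Mb ** Uop n g) ** Xpm n a) = exp (- \<i> * of_real g) * trace (Mb ** Xpm n a)"
  by (simp add: trace_cov sand_pm[OF un] smat_mult_right trace_smat)

lemma additive_mult:
  fixes f :: "real \<Rightarrow> real"
  assumes add: "\<And>g s. 0 \<le> g \<Longrightarrow> 0 \<le> s \<Longrightarrow> g + s \<le> L \<Longrightarrow> f (g + s) = f g + f s"
    and "0 \<le> s" "real k * s \<le> L"
  shows "f (real k * s) = real k * f s"
  using assms(3)
proof (induction k)
  case 0
  have "f (0 + 0) = f 0 + f 0" using add[of 0 0] 0 by simp
  then show ?case by simp
next
  case (Suc k)
  have le: "real k * s \<le> L" using Suc.prems \<open>0 \<le> s\<close> by (simp add: algebra_simps)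
  have "f (real (Suc k) * s) = f (real k * s + s)" by (simp add: algebra_simps)
  also have "\<dots> = f (real k * s) + f s"
    using add[of "real k * s" s] Suc.prems \<open>0 \<le> s\<close> by (simp add: algebra_simps)
  also have "\<dots> = real (Suc k) * f s" using Suc.IH[OF le] by (simp add: algebra_simps)
  finally show ?case .
qed

lemma additive_linear:
  fixes f :: "real \<Rightarrow> real"
  assumes L: "L > 0"
    and add: "\<And>g s. 0 \<le> g \<Longrightarrow> 0 \<le> s \<Longrightarrow> g + s \<le> L \<Longrightarrow> f (g + s) = f g + f s"
    and nn: "\<And>s. 0 \<le> s \<Longrightarrow> s \<le> L \<Longrightarrow> f s \<ge> 0"
    and s: "0 \<le> s" "s \<le> L"
  shows "f s = s * f L / L"
proof -
  have mono: "f x \<le> f y" if "0 \<le> x" "x \<le> y" "y \<le> L" for x y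
  proof -
    have "f y = f (x + (y - x))" by simp
    also have "\<dots> = f x + f (y - x)" using add[of x "y - x"] that by simp
    finally show ?thesis using nn[of "y - x"] that by simp
  qed
  have unit: "f (L / real N) = f L / real N" if "N > 0" for N :: nat
  proof -
    have "f (real N * (L / real N)) = real N * f (L / real N)"
      by (rule additive_mult[OF add]) (use L that in auto)
    then show ?thesis using that by (simp add: field_simps)
  qed
  have bound: "\<bar>f s - s * f L / L\<bar> \<le> f L / real N" if N: "N > 0" for N :: nat
  proof (cases "s = L")
    case True
    then show ?thesis using L nn[of L] by simp
  next
    case False
    then have sL: "s < L" using s by simp
    define k where "k = nat \<lfloor>s * real N / L\<rfloor>"
    have fl0: "0 \<le> s * real N / L" using s L by simp
    have k1: "real k \<le> s * real N / L" unfolding k_def using fl0 by simp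
    have k2: "s * real N / L < real k + 1" unfolding k_def using fl0 by linarith
    have kN: "k + 1 \<le> N"
    proof -
      have "s * real N / L < real N" using sL L N by (simp add: field_simps)
      then have "real k < real N" using k1 by linarith
      then show ?thesis by simp
    qed
    have u0: "0 \<le> L / real N" using L by simp
    have kN': "real (k+1) \<le> real N" "real k \<le> real N" using kN by linarith+
    have NL: "real N * (L / real N) = L" using N by simp
    have kle: "real k * (L / real N) \<le> L" "real (k+1) * (L / real N) \<le> L"
      using mult_right_mono[OF kN'(2) u0] mult_right_mono[OF kN'(1) u0] NL by simp_all
    have fk: "f (real k * (L / real N)) = real k * (f L / real N)"
      using additive_mult[where f=f and L=L, OF add u0 kle(1)] unit[OF N] by simp
    have fk1: "f (real (k+1) * (L / real N)) = real (k+1) * (f L / real N)"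
      using additive_mult[where f=f and L=L, OF add u0 kle(2)] unit[OF N] by simp
    have lo: "real k * (L / real N) \<le> s" using k1 L N by (simp add: field_simps)
    have hi: "s \<le> real (k+1) * (L / real N)" using k2 L N by (simp add: field_simps)
    have hiL: "real (k+1) * (L / real N) \<le> L" by (rule kle(2))
    have "0 \<le> real k * (L / real N)" using u0 by (intro mult_nonneg_nonneg) auto
    then have "real k * (f L / real N) \<le> f s" using mono[OF _ lo s(2)] fk by simp
    moreover have "f s \<le> real (k+1) * (f L / real N)" using mono[OF s(1) hi hiL] fk1 by simp
    moreover have "real k * (f L / real N) \<ge> s * f L / L - f L / real N"
    proof -
      have "real k \<ge> s * real N / L - 1" using k2 by simp
      then have "real k * (f L / real N) \<ge> (s * real N / L - 1) * (f L / real N)"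
        using nn[of L] L N by (intro mult_right_mono) auto
      also have "(s * real N / L - 1) * (f L / real N) = s * f L / L - f L / real N"
        using L N by (simp add: field_simps)
      finally show ?thesis .
    qed
    moreover have "real (k+1) * (f L / real N) \<le> s * f L / L + f L / real N"
    proof -
      have "real (k+1) * (f L / real N) \<le> (s * real N / L + 1) * (f L / real N)"
        using k1 nn[of L] L N by (intro mult_right_mono) auto
      also have "(s * real N / L + 1) * (f L / real N) = s * f L / L + f L / real N"
        using L N by (simp add: field_simps)
      finally show ?thesis .
    qed
    ultimately show ?thesis by linarith
  qed
  show ?thesis
  proof (rule ccontr)
    assume ne: "f s \<noteq> s * f L / L"
    define d where "d = \<bar>f s - s * f L / L\<bar>"
    have d: "d > 0" using ne unfolding d_def by simp
    obtain N :: nat where N: "N > (f L + 1) / d" using reals_Archimedean2 by blast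
    have Npos: "N > 0"
    proof -
      have "(f L + 1) / d > 0" using nn[of L] L d by simp
      then show ?thesis using N by linarith
    qed
    have "f L / real N < d"
    proof -
      have "f L + 1 < real N * d" using N d by (simp add: field_simps)
      then show ?thesis using Npos by (simp add: field_simps)
    qed
    then show False using bound[OF Npos] unfolding d_def by linarith
  qed
qed

lemma exp_mipi: "exp (- \<i> * of_real pi) = -1" "exp (- (\<i> * of_real pi)) = -1"
  by (simp_all add: complex_eq_iff Re_exp Im_exp)

lemma cc_solve:
  fixes c :: "real \<Rightarrow> complex"
  assumes add: "\<And>g s. 0 \<le> g \<Longrightarrow> 0 \<le> s \<Longrightarrow> g + s \<le> 2*pi \<Longrightarrow> g < 2*pi \<Longrightarrow> c (g + s) = c g + exp (- \<i> * of_real g) * c s"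
    and s: "0 \<le> s" "s \<le> 2*pi"
  shows "c s = c pi / 2 * (1 - exp (- \<i> * of_real s))"
proof -
  have small: "c r = c pi / 2 * (1 - exp (- \<i> * of_real r))" if r: "0 \<le> r" "r \<le> pi" for r
  proof -
    have "c (pi + r) = c pi + exp (- \<i> * of_real pi) * c r" using add[of pi r] r pi_gt_zero by simp
    moreover have "c (r + pi) = c r + exp (- \<i> * of_real r) * c pi" using add[of r pi] r pi_gt_zero by simp
    ultimately have "c pi - c r = c r + exp (- \<i> * of_real r) * c pi" by (simp add: exp_mipi add.commute)
    then have "2 * c r = c pi * (1 - exp (- \<i> * of_real r))" by (simp add: algebra_simps)
    then show ?thesis by (simp add: field_simps)
  qed
  show ?thesis
  proof (cases "s \<le> pi")
    case True
    then show ?thesis using small s by simp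
  next
    case False
    define r where "r = s - pi"
    have r: "0 \<le> r" "r \<le> pi" using False s unfolding r_def by auto
    have "c s = c (pi + r)" unfolding r_def by simp
    also have "\<dots> = c pi + exp (- \<i> * of_real pi) * c r" using add[of pi r] r s unfolding r_def by simp
    also have "\<dots> = c pi - c pi / 2 * (1 - exp (- \<i> * of_real r))" using small[OF r] by (simp add: exp_mipi)
    also have "\<dots> = c pi / 2 * (1 - exp (- \<i> * of_real s))"
    proof -
      have "exp (- \<i> * of_real s) = exp (- \<i> * of_real pi) * exp (- \<i> * of_real r)"
      proof -
        have "- \<i> * of_real s = - \<i> * of_real pi + - \<i> * of_real r" unfolding r_def by (simp add: algebra_simps)
        then show ?thesis by (simp only: exp_add)
      qed
      then have "exp (- \<i> * of_real s) = - exp (- \<i> * of_real r)" by (simp add: exp_mipi)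
      then show ?thesis by (simp add: algebra_simps)
    qed
    finally show ?thesis .
  qed
qed

lemma cmod_one_minus_exp: "(cmod (1 - exp (- \<i> * of_real u)))^2 = 2 - 2 * cos u"
proof -
  have "exp (- \<i> * of_real u) = Complex (cos u) (- sin u)"
    by (simp add: complex_eq_iff exp_Euler cos_of_real sin_of_real Re_exp Im_exp)
  then have "(cmod (1 - exp (- \<i> * of_real u)))^2 = (1 - cos u)^2 + (sin u)^2"
    by (simp add: cmod_power2)
  also have "\<dots> = 2 - 2 * cos u" using sin_cos_squared_add[of u] by (simp add: power2_eq_square algebra_simps)
  finally show ?thesis .
qed

lemma lim_N: "(\<lambda>N::nat. (real N)^2 * (2 - 2 * cos (2 * pi / real N))) \<longlonglongrightarrow> 4 * pi^2"
proof -
  have "(\<lambda>N::nat. (real N)^2 * (2 - 2 * cos (2 * pi / real N))) \<longlonglongrightarrow> 4 * (pi * pi)"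
    by real_asymp
  then show ?thesis by (simp add: power2_eq_square)
qed

lemma bound_from_N:
  fixes K x :: real
  assumes "\<And>N::nat. N > 0 \<Longrightarrow> x * ((real N)^2 * (2 - 2 * cos (2 * pi / real N))) \<le> K"
  shows "x * (4 * pi^2) \<le> K"
proof -
  have "(\<lambda>N::nat. x * ((real N)^2 * (2 - 2 * cos (2 * pi / real N)))) \<longlonglongrightarrow> x * (4 * pi^2)"
    by (intro tendsto_mult_left lim_N)
  moreover have "eventually (\<lambda>N::nat. x * ((real N)^2 * (2 - 2 * cos (2 * pi / real N))) \<le> K) sequentially"
    by (intro eventually_sequentiallyI[of 1] assms) auto
  ultimately show ?thesis by (rule tendsto_upperbound) simp
qed

lemma Theta_borel[simp]: "Theta \<in> sets borel" by (simp add: Theta_def)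

lemma Icc_Ico_integral:
  fixes f :: "real \<Rightarrow> real"
  assumes fi: "set_integrable lborel Theta f" and uv: "0 \<le> u" "u \<le> v" "v < 2*pi"
  shows "(LINT x:{u..v}|lborel. f x) = (LINT x:{u..<v}|lborel. f x)"
proof -
  have s1: "{u..v} \<subseteq> Theta" "{u..<v} \<subseteq> Theta" using uv by (auto simp: Theta_def)
  have i1: "set_integrable lborel {u..v} f" by (rule set_integrable_subset[OF fi _ s1(1)]) simp
  have i2: "set_integrable lborel {u..<v} f" by (rule set_integrable_subset[OF fi _ s1(2)]) simp
  have m1: "set_borel_measurable lborel {u..v} f"
    using i1 unfolding set_integrable_def set_borel_measurable_def by (rule borel_measurable_integrable)
  have m2: "set_borel_measurable lborel {u..<v} f"
    using i2 unfolding set_integrable_def set_borel_measurable_def by (rule borel_measurable_integrable)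
  have "AE x in lborel. (x \<in> {u..<v}) = (x \<in> {u..v})"
    using AE_lborel_singleton[of v] by (auto elim!: eventually_mono)
  then show ?thesis by (rule set_integral_cong_set[OF m2 m1])
qed

lemma ae_from_intervals:
  fixes f h F :: "real \<Rightarrow> real"
  assumes fi: "set_integrable lborel Theta f"
    and F: "\<And>x. (F has_real_derivative h x) (at x)"
    and eq: "\<And>u v. 0 \<le> u \<Longrightarrow> u \<le> v \<Longrightarrow> v < 2*pi \<Longrightarrow> (LINT x:{u..v}|lborel. f x) = F v - F u"
  shows "AE x in lborel. x \<in> Theta \<longrightarrow> f x = h x"
proof -
  define g where "g x = (if x \<in> Theta then f x else 0)" for x
  have "f integrable_on Theta" by (rule set_borel_integral_eq_integral(1)[OF fi])
  then have gU: "g integrable_on UNIV" unfolding g_def by (simp add: integrable_restrict_UNIV)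
  have gbox: "g integrable_on cbox a b" for a b :: real
    using integrable_on_subinterval[OF gU, of a b] by simp
  obtain N where N: "negligible N"
    and ND: "\<And>x e. \<lbrakk>x \<notin> N; 0 < e\<rbrakk> \<Longrightarrow> \<exists>d>0. \<forall>hh. 0 < hh \<and> hh < d \<longrightarrow>
               norm(integral (cbox x (x + hh *\<^sub>R One)) g /\<^sub>R hh ^ DIM(real) - g x) < e"
    using integrable_ccontinuous_explicit[of g] gbox by blast
  have pt: "f x = h x" if x: "x \<in> {0<..<2*pi}" "x \<notin> N" for x
  proof -
    have xT: "x \<in> Theta" using x by (auto simp: Theta_def)
    have "\<bar>f x - h x\<bar> \<le> 2 * e" if e: "e > 0" for e
    proof -
      obtain d1 where d1: "d1 > 0" and d1h: "\<And>hh. 0 < hh \<Longrightarrow> hh < d1 \<Longrightarrow>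
          norm(integral (cbox x (x + hh *\<^sub>R One)) g /\<^sub>R hh ^ DIM(real) - g x) < e"
        using ND[OF x(2) e] by blast
      have "((\<lambda>hh. (F (x + hh) - F x) / hh) \<longlongrightarrow> h x) (at 0)" using F[of x] by (simp add: DERIV_def)
      then obtain d2 where d2: "d2 > 0" and d2h: "\<And>hh. hh \<noteq> 0 \<and> norm (hh - 0) < d2 \<Longrightarrow> norm ((F (x + hh) - F x) / hh - h x) < e"
        using LIM_D[OF _ e] by blast
      define hh where "hh = min (min d1 d2) (2*pi - x) / 2"
      have mn: "min (min d1 d2) (2*pi - x) \<le> 2*pi - x" "min (min d1 d2) (2*pi - x) \<le> d1"
        "min (min d1 d2) (2*pi - x) \<le> d2" "min (min d1 d2) (2*pi - x) > 0" using d1 d2 x by auto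
      have hh: "0 < hh" "hh < d1" "hh < d2" "x + hh < 2*pi" using mn unfolding hh_def by linarith+
      have "integral (cbox x (x + hh *\<^sub>R One)) g = integral {x..x+hh} g" by simp
      also have "\<dots> = integral {x..x+hh} f"
        by (rule integral_cong) (use x hh in \<open>auto simp: g_def Theta_def\<close>)
      also have "\<dots> = (LINT y:{x..x+hh}|lborel. f y)"
      proof -
        have "set_integrable lborel {x..x+hh} f"
          by (rule set_integrable_subset[OF fi]) (use x hh in \<open>auto simp: Theta_def\<close>)
        then show ?thesis by (simp add: set_borel_integral_eq_integral(2))
      qed
      also have "\<dots> = F (x + hh) - F x" by (rule eq) (use x hh in auto)
      finally have I: "integral (cbox x (x + hh *\<^sub>R One)) g = F (x + hh) - F x" .
      have "norm(integral (cbox x (x + hh *\<^sub>R One)) g /\<^sub>R hh ^ DIM(real) - g x) < e"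
        by (rule d1h[OF hh(1) hh(2)])
      then have "\<bar>(F (x + hh) - F x) /\<^sub>R hh - g x\<bar> < e" unfolding I by simp
      then have 1: "\<bar>(F (x + hh) - F x) / hh - f x\<bar> < e"
        using xT by (simp add: g_def divide_inverse_commute)
      have 2: "\<bar>(F (x + hh) - F x) / hh - h x\<bar> < e" using d2h[of hh] hh by simp
      show ?thesis using 1 2 by linarith
    qed
    note this[of "\<bar>f x - h x\<bar> / 4"]
    then show ?thesis by (cases "f x = h x") auto
  qed
  have "N \<in> null_sets lebesgue" using N by (simp add: negligible_iff_null_sets)
  then have "AE x in lebesgue. x \<notin> N" by (rule AE_not_in)
  then have aeN: "AE x in lborel. x \<notin> N" by (simp add: AE_completion_iff)
  show ?thesis using aeN AE_lborel_singleton[of 0]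
  proof eventually_elim
    case (elim x)
    show ?case
    proof
      assume "x \<in> Theta"
      then have "x \<in> {0<..<2*pi}" using elim by (auto simp: Theta_def)
      then show "f x = h x" using pt elim by blast
    qed
  qed
qed

lemma deriv_seq_zero:
  fixes \<delta> :: "real \<Rightarrow> real"
  assumes d: "(\<delta> has_real_derivative L) (at \<theta>)" and z: "\<delta> \<theta> = 0" "\<And>m. \<delta> (\<theta> + inverse (real (Suc m))) = 0"
  shows "L = 0"
proof -
  have lim: "((\<lambda>hh. (\<delta> (\<theta> + hh) - \<delta> \<theta>) / hh) \<longlongrightarrow> L) (at 0)" using d by (simp add: DERIV_def)
  have s: "filterlim (\<lambda>m. inverse (real (Suc m))) (at 0) sequentially"
    unfolding filterlim_at using LIMSEQ_inverse_real_of_nat by auto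
  have "((\<lambda>m. (\<delta> (\<theta> + inverse (real (Suc m))) - \<delta> \<theta>) / inverse (real (Suc m))) \<longlongrightarrow> L) sequentially"
    by (rule filterlim_compose[OF lim s])
  then have "((\<lambda>m. 0::real) \<longlongrightarrow> L) sequentially" using z by simp
  then show ?thesis by (simp add: LIMSEQ_const_iff)
qed

lemma fisher_eq:
  assumes ae: "\<And>t. AE x in lborel. x \<in> Theta \<longrightarrow> p t x = hh t x"
    and dd: "diff_density p \<theta>"
    and dh: "\<And>x. ((\<lambda>t. hh t x) has_real_derivative dh x) (at \<theta>)"
  shows "fisher p \<theta> = (\<integral>\<^sup>+ x \<in> Theta. ennreal ((dh x)^2 / hh \<theta> x) \<partial>lborel)"
proof -
  have ae1: "AE x in lborel. \<forall>m. x \<in> Theta \<longrightarrow> p (\<theta> + inverse (real (Suc m))) x = hh (\<theta> + inverse (real (Suc m))) x"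
    by (subst AE_all_countable) (intro allI ae)
  have "AE x in lborel. x \<in> Theta \<longrightarrow> deriv (\<lambda>t. p t x) \<theta> = dh x \<and> p \<theta> x = hh \<theta> x"
    using ae1 ae[of \<theta>] dd[unfolded diff_density_def]
  proof eventually_elim
    case (elim x)
    show ?case
    proof
      assume xT: "x \<in> Theta"
      have D: "((\<lambda>t. p t x) has_real_derivative deriv (\<lambda>t. p t x) \<theta>) (at \<theta>)"
        using elim xT by (simp add: DERIV_deriv_iff_real_differentiable)
      have "((\<lambda>t. p t x - hh t x) has_real_derivative deriv (\<lambda>t. p t x) \<theta> - dh x) (at \<theta>)"
        by (rule DERIV_diff[OF D dh])
      then have "deriv (\<lambda>t. p t x) \<theta> - dh x = 0"
        by (rule deriv_seq_zero) (use elim xT in auto)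
      then show "deriv (\<lambda>t. p t x) \<theta> = dh x \<and> p \<theta> x = hh \<theta> x" using elim xT by simp
    qed
  qed
  then have "AE x in lborel. ennreal ((deriv (\<lambda>t. p t x) \<theta>)\<^sup>2 / p \<theta> x) * indicator Theta x
      = ennreal ((dh x)^2 / hh \<theta> x) * indicator Theta x"
    by eventually_elim (auto split: split_indicator)
  then show ?thesis unfolding fisher_def by (rule nn_integral_cong_AE)
qed

lemma periodic_nat:
  assumes per: "\<And>y. G (y + 2*pi) = G y"
  shows "G (y + 2*pi*real m) = G y"
proof (induction m)
  case (Suc m)
  have "G (y + 2*pi*real (Suc m)) = G ((y + 2*pi*real m) + 2*pi)" by (simp add: algebra_simps)
  then show ?case using per Suc by simp
qed simp

lemma periodic_int:
  assumes per: "\<And>y. G (y + 2*pi) = G y"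
  shows "G (y + 2*pi*real_of_int k) = G y"
proof (cases "k \<ge> 0")
  case True
  then obtain m where "k = int m" using nonneg_eq_int by blast
  then show ?thesis using periodic_nat[where G=G, OF per] by simp
next
  case False
  then obtain m where m: "k = - int m" by (metis neg_int_cases less_le not_le)
  have "G y = G ((y + 2*pi*real_of_int k) + 2*pi*real m)" using periodic_nat[where G=G, OF per] m by simp
  also have "\<dots> = G (y + 2*pi*real_of_int k)" by (rule periodic_nat[where G=G, OF per])
  finally show ?thesis by simp
qed

lemma shift_basic:
  fixes G :: "real \<Rightarrow> ennreal"
  assumes Gm[measurable]: "G \<in> borel_measurable borel" and per: "\<And>y. G (y + 2*pi) = G y"
    and s: "0 \<le> s" "s < 2*pi"
  shows "(\<integral>\<^sup>+x. G (x + s) * indicator {0..<2*pi} x \<partial>lborel) = (\<integral>\<^sup>+x. G x * indicator {0..<2*pi} x \<partial>lborel)"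
proof -
  have "(\<integral>\<^sup>+y. G y * indicator {0..<2*pi} (y - s) \<partial>lborel)
      = ennreal \<bar>1\<bar> * (\<integral>\<^sup>+x. G (s + 1 * x) * indicator {0..<2*pi} (s + 1 * x - s) \<partial>lborel)"
    by (rule nn_integral_real_affine) auto
  then have 1: "(\<integral>\<^sup>+x. G (x + s) * indicator {0..<2*pi} x \<partial>lborel) = (\<integral>\<^sup>+y. G y * indicator {0..<2*pi} (y - s) \<partial>lborel)"
    by (simp add: add.commute)
  have ind: "indicator {0..<2*pi} (y - s) = (indicator {s..<2*pi} y + indicator {2*pi..<2*pi+s} y :: ennreal)" for y
    using s by (auto split: split_indicator)
  have "(\<integral>\<^sup>+y. G y * indicator {0..<2*pi} (y - s) \<partial>lborel)
      = (\<integral>\<^sup>+y. G y * indicator {s..<2*pi} y + G y * indicator {2*pi..<2*pi+s} y \<partial>lborel)"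
    by (simp add: ind distrib_left)
  also have "\<dots> = (\<integral>\<^sup>+y. G y * indicator {s..<2*pi} y \<partial>lborel) + (\<integral>\<^sup>+y. G y * indicator {2*pi..<2*pi+s} y \<partial>lborel)"
    by (rule nn_integral_add) auto
  also have "(\<integral>\<^sup>+y. G y * indicator {2*pi..<2*pi+s} y \<partial>lborel) = (\<integral>\<^sup>+y. G y * indicator {0..<s} y \<partial>lborel)"
  proof -
    have a: "(\<integral>\<^sup>+y. G y * indicator {2*pi..<2*pi+s} y \<partial>lborel)
      = ennreal \<bar>1\<bar> * (\<integral>\<^sup>+x. G (2*pi + 1 * x) * indicator {2*pi..<2*pi+s} (2*pi + 1 * x) \<partial>lborel)"
      by (rule nn_integral_real_affine) auto
    have b: "(\<integral>\<^sup>+x. G (2*pi + 1 * x) * indicator {2*pi..<2*pi+s} (2*pi + 1 * x) \<partial>lborel) = (\<integral>\<^sup>+y. G y * indicator {0..<s} y \<partial>lborel)"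
      by (intro nn_integral_cong) (auto simp: per add.commute split: split_indicator)
    show ?thesis using a b by simp
  qed
  also have "(\<integral>\<^sup>+y. G y * indicator {s..<2*pi} y \<partial>lborel) + (\<integral>\<^sup>+y. G y * indicator {0..<s} y \<partial>lborel)
     = (\<integral>\<^sup>+y. G y * indicator {s..<2*pi} y + G y * indicator {0..<s} y \<partial>lborel)"
    by (rule nn_integral_add[symmetric]) auto
  also have "\<dots> = (\<integral>\<^sup>+x. G x * indicator {0..<2*pi} x \<partial>lborel)"
    by (intro nn_integral_cong) (use s in \<open>auto split: split_indicator\<close>)
  finally show ?thesis using 1 by simp
qed

lemma shift_int:
  fixes G :: "real \<Rightarrow> ennreal"
  assumes Gm: "G \<in> borel_measurable borel" and per: "\<And>y. G (y + 2*pi) = G y"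
  shows "(\<integral>\<^sup>+x\<in>Theta. G (x + s) \<partial>lborel) = (\<integral>\<^sup>+x\<in>Theta. G x \<partial>lborel)"
proof -
  define k where "k = \<lfloor>s / (2*pi)\<rfloor>"
  define s' where "s' = s - 2*pi*real_of_int k"
  have k1: "real_of_int k \<le> s / (2*pi)" "s / (2*pi) < real_of_int k + 1" unfolding k_def by linarith+
  have s': "0 \<le> s'" "s' < 2*pi"
  proof -
    have "2*pi*real_of_int k \<le> s" using k1(1) pi_gt_zero by (simp add: field_simps)
    moreover have "s < 2*pi*real_of_int k + 2*pi" using k1(2) pi_gt_zero by (simp add: field_simps)
    ultimately show "0 \<le> s'" "s' < 2*pi" unfolding s'_def by auto
  qed
  have "G (x + s) = G (x + s')" for x
    using periodic_int[where G=G, OF per, of "x + s'" k] unfolding s'_def by (simp add: algebra_simps)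
  then show ?thesis unfolding Theta_def using shift_basic[OF Gm per s'] by simp
qed

lemma exp_mi: "exp (- (\<i> * of_real y)) = Complex (cos y) (- sin y)"
  by (simp add: complex_eq_iff Re_exp Im_exp)

lemma Re_mult_exp_mi: "Re (k * exp (- (\<i> * of_real y))) = Re k * cos y + Im k * sin y"
  by (simp add: exp_mi)

lemma shift_Ico:
  assumes "0 \<le> g" "0 \<le> s" "g + s \<le> 2*pi"
  shows "shift_set g {0..<s} = {g..<g+s}"
proof
  show "shift_set g {0..<s} \<subseteq> {g..<g+s}"
  proof
    fix \<theta> assume "\<theta> \<in> shift_set g {0..<s}"
    then obtain \<theta>' k where th: "\<theta> \<in> Theta" "\<theta>' \<in> {0..<s}" "\<theta> = g + \<theta>' + 2 * pi * of_int k"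
      unfolding shift_set_def by blast
    have eq: "2*pi*real_of_int k = \<theta> - g - \<theta>'" using th by simp
    have b1: "\<theta> - g - \<theta>' < 2*pi" "\<theta> - g - \<theta>' > -2*pi" using th(1,2) assms by (auto simp: Theta_def)
    have "(2*pi) * (1 - real_of_int k) = 2*pi - (\<theta> - g - \<theta>')" "(2*pi) * (real_of_int k + 1) = 2*pi + (\<theta> - g - \<theta>')"
      using eq by (simp_all add: algebra_simps)
    then have h1: "0 < (2*pi) * (1 - real_of_int k)" using b1 by linarith
    have "0 < 1 - real_of_int k" using zero_less_mult_pos[OF h1] pi_gt_zero by simp
    moreover have h2: "0 < (2*pi) * (real_of_int k + 1)" using b1 \<open>(2*pi) * (real_of_int k + 1) = _\<close> by linarith
    have "0 < real_of_int k + 1" using zero_less_mult_pos[OF h2] pi_gt_zero by simp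
    ultimately have "k = 0" by linarith
    then show "\<theta> \<in> {g..<g+s}" using th by simp
  qed
next
  show "{g..<g+s} \<subseteq> shift_set g {0..<s}"
  proof
    fix \<theta> assume th: "\<theta> \<in> {g..<g+s}"
    then have "\<theta> \<in> Theta" "\<theta> - g \<in> {0..<s}" "\<theta> = g + (\<theta> - g) + 2 * pi * of_int (0::int)"
      using assms by (auto simp: Theta_def)
    then show "\<theta> \<in> shift_set g {0..<s}" unfolding shift_set_def by blast
  qed
qed

lemma sums_const_zero: "(\<lambda>k. c) sums (c::'a::real_normed_vector) \<Longrightarrow> c = 0"
  using summable_LIMSEQ_zero[of "\<lambda>k. c"] by (auto simp: sums_iff LIMSEQ_const_iff)

lemma povm_sums:
  assumes "is_povm M" "\<And>k. A k \<in> sets borel" "\<And>k. A k \<subseteq> Theta" "disjoint_family A"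
  shows "(\<lambda>k. M (A k)) sums M (\<Union>k. A k)"
  using assms unfolding is_povm_def by blast

lemma trace_zero[simp]: "trace (0::cmat) = 0" by (simp add: trace_def)

lemma povm_empty: assumes "is_povm M" shows "M {} = 0"
proof -
  have "(\<lambda>k. M ((\<lambda>k. {}) k)) sums M (\<Union>k. (\<lambda>k::nat. {}::real set) k)"
    by (rule povm_sums[OF assms]) (auto simp: disjoint_family_on_def)
  then show ?thesis by (simp add: sums_const_zero)
qed

lemma povm_add:
  assumes P: "is_povm M" and B: "B1 \<in> sets borel" "B2 \<in> sets borel" "B1 \<subseteq> Theta" "B2 \<subseteq> Theta" "B1 \<inter> B2 = {}"
  shows "M (B1 \<union> B2) = M B1 + M B2"
proof -
  define A where "A k = (if k = 0 then B1 else if k = 1 then B2 else {})" for k :: nat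
  have "(\<lambda>k. M (A k)) sums M (\<Union>k. A k)"
    by (rule povm_sums[OF P]) (use B in \<open>auto simp: A_def disjoint_family_on_def\<close>)
  moreover have "(\<Union>k. A k) = B1 \<union> B2" unfolding A_def by (auto split: if_splits)
  moreover have "(\<lambda>k. M (A k)) sums (\<Sum>k\<in>{0,1}. M (A k))"
    by (rule sums_finite) (auto simp: A_def povm_empty[OF P])
  ultimately show ?thesis by (simp add: A_def sums_iff)
qed

lemma povm_psd: "is_povm M \<Longrightarrow> B \<in> sets borel \<Longrightarrow> B \<subseteq> Theta \<Longrightarrow> psd (M B)"
  unfolding is_povm_def by blast

lemma Ico_sub: "0 \<le> s \<Longrightarrow> s \<le> 2*pi \<Longrightarrow> {0..<s} \<subseteq> Theta" by (auto simp: Theta_def)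

lemma trace_cov_mp:
  assumes un: "norm n = 1"
  shows "trace ((adj (Uop n g) ** Mb ** Uop n g) ** Xmp n a) = exp (\<i> * of_real g) * trace (Mb ** Xmp n a)"
  by (simp add: trace_cov sand_mp[OF un] smat_mult_right trace_smat)

lemma trace_X_pp: assumes un: "norm n = 1" shows "trace (Xpp n a) = trace (Pp n ** bloch a)"
proof -
  have "trace (Pp n ** bloch a ** Pp n) = trace (Pp n ** (Pp n ** bloch a))" by (rule trace_mul_sym)
  also have "\<dots> = trace (Pp n ** bloch a)" by (simp add: matrix_mul_assoc PpPp[OF un])
  finally show ?thesis .
qed
lemma trace_X_mm: assumes un: "norm n = 1" shows "trace (Xmm n a) = trace (Pm n ** bloch a)"
proof -
  have "trace (Pm n ** bloch a ** Pm n) = trace (Pm n ** (Pm n ** bloch a))" by (rule trace_mul_sym)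
  also have "\<dots> = trace (Pm n ** bloch a)" by (simp add: matrix_mul_assoc PmPm[OF un])
  finally show ?thesis .
qed

locale covM =
  fixes n a :: "real^3" and M :: "real set \<Rightarrow> cmat"
  assumes un: "norm n = 1" and ua: "norm a = 1" and P: "is_povm M" and cov: "covariant n M"
begin

definition "ap s = Re (trace (M {0..<s} ** Xpp n a))"
definition "am s = Re (trace (M {0..<s} ** Xmm n a))"
definition "cf s = trace (M {0..<s} ** Xpm n a)"

lemma M_shift:
  assumes "0 \<le> g" "g < 2*pi" "0 \<le> s" "g + s \<le> 2*pi"
  shows "M {g..<g+s} = adj (Uop n g) ** M {0..<s} ** Uop n g"
proof -
  have "M (shift_set g {0..<s}) = adj (Uop n g) ** M {0..<s} ** Uop n g"
    using cov assms unfolding covariant_def by (auto simp: Theta_def)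
  then show ?thesis using shift_Ico[of g s] assms by simp
qed

lemma M_split:
  assumes "0 \<le> g" "g < 2*pi" "0 \<le> s" "g + s \<le> 2*pi"
  shows "M {0..<g+s} = M {0..<g} + adj (Uop n g) ** M {0..<s} ** Uop n g"
proof -
  have "{0..<g+s} = {0..<g} \<union> {g..<g+s}" using assms by auto
  then have "M {0..<g+s} = M {0..<g} + M {g..<g+s}"
    using povm_add[OF P, of "{0..<g}" "{g..<g+s}"] assms by (auto simp: Theta_def)
  then show ?thesis using M_shift[OF assms] by simp
qed

lemma psd_facts:
  assumes "0 \<le> s" "s \<le> 2*pi"
  shows "Im (trace (M {0..<s} ** Xpp n a)) = 0 \<and> Im (trace (M {0..<s} ** Xmm n a)) = 0
    \<and> ap s \<ge> 0 \<and> am s \<ge> 0 \<and> trace (M {0..<s} ** Xmp n a) = cnj (cf s) \<and> (cmod (cf s))^2 \<le> ap s * am s"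
  using psd_cs[OF un ua povm_psd[OF P _ Ico_sub[OF assms]]] unfolding ap_def am_def cf_def by simp

lemma add_eqs:
  assumes "0 \<le> g" "g < 2*pi" "0 \<le> s" "g + s \<le> 2*pi"
  shows "ap (g + s) = ap g + ap s" "am (g + s) = am g + am s" "cf (g + s) = cf g + exp (- \<i> * of_real g) * cf s"
  unfolding ap_def am_def cf_def M_split[OF assms]
  by (simp_all add: matrix_add_rdistrib' trace_add trace_cov_pp[OF un] trace_cov_mm[OF un] trace_cov_pm[OF un])

lemma M_full: "M {0..<2*pi} = mat 1" using P unfolding is_povm_def Theta_def by simp

lemma ap_full: "ap (2*pi) = (1 + inner a n)/2"
  unfolding ap_def M_full by (simp add: trace_X_pp[OF un] trace_Pp_rho)
lemma am_full: "am (2*pi) = (1 - inner a n)/2"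
  unfolding am_def M_full by (simp add: trace_X_mm[OF un] trace_Pm_rho)

lemma ap_lin: assumes "0 \<le> s" "s \<le> 2*pi" shows "ap s = s * ((1 + inner a n)/2) / (2*pi)"
proof -
  have "ap s = s * ap (2*pi) / (2*pi)"
  proof (rule additive_linear)
    show "ap (g + s) = ap g + ap s" if "0 \<le> g" "0 \<le> s" "g + s \<le> 2*pi" for g s
    proof (cases "g < 2*pi")
      case True then show ?thesis using add_eqs(1) that by blast
    next
      case False then have "s = 0" "g = 2*pi" using that by auto
      then show ?thesis by (simp add: ap_def povm_empty[OF P])
    qed
  qed (use assms psd_facts in auto)
  then show ?thesis by (simp add: ap_full)
qed

lemma am_lin: assumes "0 \<le> s" "s \<le> 2*pi" shows "am s = s * ((1 - inner a n)/2) / (2*pi)"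
proof -
  have "am s = s * am (2*pi) / (2*pi)"
  proof (rule additive_linear)
    show "am (g + s) = am g + am s" if "0 \<le> g" "0 \<le> s" "g + s \<le> 2*pi" for g s
    proof (cases "g < 2*pi")
      case True then show ?thesis using add_eqs(2) that by blast
    next
      case False then have "s = 0" "g = 2*pi" using that by auto
      then show ?thesis by (simp add: am_def povm_empty[OF P])
    qed
  qed (use assms psd_facts in auto)
  then show ?thesis by (simp add: am_full)
qed

definition "\<kappa> = cf pi / 2"

lemma cf_sol: assumes "0 \<le> s" "s \<le> 2*pi" shows "cf s = \<kappa> * (1 - exp (- \<i> * of_real s))"
  unfolding \<kappa>_def by (rule cc_solve[OF add_eqs(3) assms])

lemma kappa_bound: "(cmod \<kappa>)^2 * (4 * pi^2) \<le> ((1 + inner a n)/2) * ((1 - inner a n)/2)"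
proof (rule bound_from_N)
  fix N :: nat assume N: "N > 0"
  define s where "s = 2 * pi / real N"
  have s: "0 \<le> s" "s \<le> 2*pi" using N unfolding s_def by (auto simp: field_simps)
  have "(cmod (cf s))^2 \<le> ap s * am s" using psd_facts[OF s] by simp
  also have "ap s * am s = ((1 + inner a n)/2) * ((1 - inner a n)/2) * (s / (2*pi))^2"
    by (simp add: ap_lin[OF s] am_lin[OF s] power2_eq_square)
  also have "s / (2*pi) = 1 / real N" unfolding s_def using N by simp
  finally have 1: "(cmod (cf s))^2 \<le> ((1 + inner a n)/2) * ((1 - inner a n)/2) * (1 / real N)^2" .
  define K where "K = ((1 + inner a n)/2) * ((1 - inner a n)/2)"
  have "(cmod (cf s))^2 \<le> K / (real N)^2" using 1 unfolding K_def by (simp add: power_divide)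
  then have 2: "(cmod (cf s))^2 * (real N)^2 \<le> K" using N by (simp add: pos_le_divide_eq)
  have "(cmod (cf s))^2 = (cmod \<kappa>)^2 * (2 - 2 * cos s)"
    unfolding cf_sol[OF s] norm_mult power_mult_distrib cmod_one_minus_exp ..
  then have "(cmod \<kappa>)^2 * (2 - 2 * cos s) * (real N)^2 \<le> ((1 + inner a n)/2) * ((1 - inner a n)/2)"
    using 2 unfolding K_def by simp
  then show "(cmod \<kappa>)^2 * ((real N)^2 * (2 - 2 * cos (2 * pi / real N))) \<le> ((1 + inner a n)/2) * ((1 - inner a n)/2)"
    unfolding s_def by (simp add: algebra_simps)
qed

definition "Hf t x = x / (2*pi) - 2 * (Re \<kappa> * cos (t + x) + Im \<kappa> * sin (t + x))"

lemma trace_interval: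
  assumes uv: "0 \<le> u" "u < 2*pi" "u \<le> v" "v \<le> 2*pi"
  shows "Re (trace (M {u..<v} ** rho_t n a t)) = Hf t v - Hf t u"
proof -
  define s where "s = v - u"
  have s: "0 \<le> s" "s \<le> 2*pi" "u + s \<le> 2*pi" "v = u + s" using uv unfolding s_def by auto
  have Mu: "M {u..<v} = adj (Uop n u) ** M {0..<s} ** Uop n u" using M_shift[of u s] s uv by simp
  have pf: "Im (trace (M {0..<s} ** Xpp n a)) = 0" "Im (trace (M {0..<s} ** Xmm n a)) = 0"
     "trace (M {0..<s} ** Xmp n a) = cnj (cf s)" using psd_facts[OF s(1,2)] by auto
  define z where "z = exp (- \<i> * of_real t) * (exp (- \<i> * of_real u) * cf s)"
  have tr: "trace (M {u..<v} ** rho_t n a t) = trace (M {0..<s} ** Xpp n a) + trace (M {0..<s} ** Xmm n a) + z + cnj z"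
    unfolding rho_t_decomp[OF un] Mu z_def
    by (simp add: matrix_add_ldistrib smat_mult_right trace_add trace_smat trace_cov_pp[OF un] trace_cov_mm[OF un]
        trace_cov_pm[OF un] trace_cov_mp[OF un] pf(3) exp_cnj cf_def)
  have R1: "Re (trace (M {u..<v} ** rho_t n a t)) = ap s + am s + 2 * Re z"
    unfolding tr ap_def am_def by simp
  have R2: "ap s + am s = s / (2*pi)" using ap_lin[OF s(1,2)] am_lin[OF s(1,2)] by (simp add: field_simps)
  have zeq: "z = \<kappa> * exp (- (\<i> * of_real (t + u))) - \<kappa> * exp (- (\<i> * of_real (t + v)))"
  proof -
    have e1: "exp (- \<i> * of_real t) * exp (- \<i> * of_real u) = exp (- (\<i> * of_real (t + u)))"
    proof -
      have "- (\<i> * of_real (t + u)) = (- \<i> * of_real t) + (- \<i> * of_real u)" by (simp add: algebra_simps)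
      then show ?thesis by (simp only: exp_add)
    qed
    have e2: "exp (- \<i> * of_real t) * exp (- \<i> * of_real u) * exp (- \<i> * of_real s) = exp (- (\<i> * of_real (t + v)))"
    proof -
      have "- (\<i> * of_real (t + v)) = (- \<i> * of_real t) + (- \<i> * of_real u) + (- \<i> * of_real s)"
        using s(4) by (simp add: algebra_simps)
      then show ?thesis by (simp only: exp_add)
    qed
    show ?thesis unfolding z_def cf_sol[OF s(1,2)]
      using e1 e2 by (simp add: algebra_simps)
  qed
  have R3: "Re z = (Re \<kappa> * cos (t+u) + Im \<kappa> * sin (t+u)) - (Re \<kappa> * cos (t+v) + Im \<kappa> * sin (t+v))"
    by (simp only: zeq minus_complex.sel Re_mult_exp_mi)
  have "Re (trace (M {u..<v} ** rho_t n a t)) = s / (2*pi) + 2 * ((Re \<kappa> * cos (t+u) + Im \<kappa> * sin (t+u)) - (Re \<kappa> * cos (t+v) + Im \<kappa> * sin (t+v)))"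
    using R1 R2 R3 by simp
  moreover have "Hf t v - Hf t u = s / (2*pi) + 2 * ((Re \<kappa> * cos (t+u) + Im \<kappa> * sin (t+u)) - (Re \<kappa> * cos (t+v) + Im \<kappa> * sin (t+v)))"
    unfolding Hf_def s_def by (simp add: diff_divide_distrib algebra_simps)
  ultimately show ?thesis by simp
qed

end

lemma XX0: "Q ** P = 0 \<Longrightarrow> (A ** R ** Q) ** (P ** R ** B) = (0::cmat)"
proof -
  assume h: "Q ** P = 0"
  have "(A ** R ** Q) ** (P ** R ** B) = A ** R ** (Q ** P) ** R ** B" by (simp add: matrix_mul_assoc)
  then show ?thesis using h by simp
qed

lemma XX1:
  assumes ua: "norm a = 1" and QQ: "Q ** Q = Q"
  shows "(A ** bloch a ** Q) ** (Q ** bloch a ** B) = smat (trace (Q ** bloch a)) (A ** bloch a ** B)"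
proof -
  have "(A ** bloch a ** Q) ** (Q ** bloch a ** B) = A ** (bloch a ** (Q ** Q) ** bloch a) ** B"
    by (simp add: matrix_mul_assoc)
  also have "\<dots> = A ** smat (trace (Q ** bloch a)) (bloch a) ** B" using QQ rho_sandwich[OF ua] by simp
  finally show ?thesis by (simp add: smat_mult_left smat_mult_right)
qed

lemma trace_pm0: assumes un: "norm n = 1" shows "trace (Pp n ** Y ** Pm n) = 0"
proof -
  have "trace ((Pp n ** Y) ** Pm n) = trace (Pm n ** (Pp n ** Y))" by (rule trace_mul_sym)
  also have "\<dots> = 0" by (simp add: matrix_mul_assoc PmPp[OF un])
  finally show ?thesis .
qed
lemma trace_mp0: assumes un: "norm n = 1" shows "trace (Pm n ** Y ** Pp n) = 0"
proof -
  have "trace ((Pm n ** Y) ** Pp n) = trace (Pp n ** (Pm n ** Y))" by (rule trace_mul_sym)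
  also have "\<dots> = 0" by (simp add: matrix_mul_assoc PpPm[OF un])
  finally show ?thesis .
qed

context fixes n a :: "real^3" assumes un: "norm n = 1" and ua: "norm a = 1" begin

abbreviation "rp \<equiv> trace (Pp n ** bloch a)"
abbreviation "rm \<equiv> trace (Pm n ** bloch a)"

lemmas XXs = XX0[OF PpPm[OF un]] XX0[OF PmPp[OF un]] XX1[OF ua PpPp[OF un]] XX1[OF ua PmPm[OF un]]

lemma tr_lin4: "trace (X ** (A + B + smat c C + smat d D)) = trace (X ** A) + trace (X ** B) + c * trace (X ** C) + d * trace (X ** D)"
  by (simp add: matrix_add_ldistrib smat_mult_right trace_add trace_smat)

lemma tr_pp: "trace (Xpp n a ** rho_t n a t) = rp * rp"
  unfolding rho_t_decomp[OF un] tr_lin4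
  by (simp add: XXs trace_smat trace_X_pp[OF un] trace_pm0[OF un] trace_mp0[OF un])
lemma tr_mm: "trace (Xmm n a ** rho_t n a t) = rm * rm"
  unfolding rho_t_decomp[OF un] tr_lin4
  by (simp add: XXs trace_smat trace_X_mm[OF un] trace_pm0[OF un] trace_mp0[OF un])
lemma tr_pm: "trace (Xpm n a ** rho_t n a t) = exp (\<i> * of_real t) * (rm * rp)"
  unfolding rho_t_decomp[OF un] tr_lin4
  by (simp add: XXs trace_smat trace_X_pp[OF un] trace_pm0[OF un] trace_mp0[OF un])
lemma tr_mp: "trace (Xmp n a ** rho_t n a t) = exp (- \<i> * of_real t) * (rp * rm)"
  unfolding rho_t_decomp[OF un] tr_lin4
  by (simp add: XXs trace_smat trace_X_mm[OF un] trace_pm0[OF un] trace_mp0[OF un])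


lemma sum_mult_right: "(\<Sum>k\<in>S. f k) ** (Y::cmat) = (\<Sum>k\<in>S. f k ** Y)"
  by (induction S rule: infinite_finite_induct) (simp_all add: matrix_add_rdistrib')
lemma trace_sum: "trace (\<Sum>k\<in>S. f k) = (\<Sum>k\<in>S. trace (f k :: cmat))"
  by (induction S rule: infinite_finite_induct) (simp_all add: trace_add)

lemma Proj_half: "Proj n (1/2) = Pp n" "Proj n (-1/2) = Pm n" "Proj n (- (1/2)) = Pm n" by (simp_all add: Pp_def Pm_def)

lemma trace_Mdens_raw:
  "trace (Mstar_dens n a x ** rho_t n a t) = 1 / (2 * of_real pi) *
     (exp (0) / of_real (sqrt (Re rm * Re rm)) * (rm * rm)
    + exp (\<i> * of_real x) / of_real (sqrt (Re rm * Re rp)) * (exp (- \<i> * of_real t) * (rp * rm))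
    + exp (- \<i> * of_real x) / of_real (sqrt (Re rp * Re rm)) * (exp (\<i> * of_real t) * (rm * rp))
    + exp (0) / of_real (sqrt (Re rp * Re rp)) * (rp * rp))"
  unfolding Mstar_dens_def smat_mult_left trace_smat sum_mult_right trace_sum
  by (simp add: Proj_half smat_mult_left trace_smat tr_pp tr_mm tr_pm tr_mp algebra_simps)


lemma exp_pair: "exp (\<i> * of_real x) * exp (- \<i> * of_real t) + exp (- \<i> * of_real x) * exp (\<i> * of_real t)
   = of_real (2 * cos (x - t))"
  by (simp add: complex_eq_iff Re_exp Im_exp cos_diff algebra_simps)

lemma trace_Mdens:
  assumes al: "(1 + inner a n)/2 > 0" and be: "(1 - inner a n)/2 > 0"
  shows "trace (Mstar_dens n a x ** rho_t n a t)
     = of_real ((1 + 2 * sqrt ((1 + inner a n)/2 * ((1 - inner a n)/2)) * cos (x - t)) / (2*pi))"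
proof -
  define \<alpha> where "\<alpha> = (1 + inner a n)/2"
  define \<beta> where "\<beta> = (1 - inner a n)/2"
  define sq where "sq = sqrt (\<alpha> * \<beta>)"
  have ab: "\<alpha> > 0" "\<beta> > 0" using al be unfolding \<alpha>_def \<beta>_def by auto
  have sq: "sq > 0" "sq * sq = \<alpha> * \<beta>" unfolding sq_def using ab by auto
  have rpv: "rp = of_real \<alpha>" "rm = of_real \<beta>" unfolding \<alpha>_def \<beta>_def by (simp_all add: trace_Pp_rho trace_Pm_rho)
  have s1: "sqrt (\<beta> * \<beta>) = \<beta>" "sqrt (\<alpha> * \<alpha>) = \<alpha>" "sqrt (\<beta> * \<alpha>) = sq" "sqrt (\<alpha> * \<beta>) = sq"
    using ab unfolding sq_def by (simp_all add: mult.commute)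
  have q: "\<alpha> * \<beta> / sq = sq" using sq by (simp add: field_simps)
  have "trace (Mstar_dens n a x ** rho_t n a t) = 1 / (2 * of_real pi) *
     (of_real \<beta> + of_real \<alpha> + of_real (\<alpha> * \<beta> / sq) *
       (exp (\<i> * of_real x) * exp (- \<i> * of_real t) + exp (- \<i> * of_real x) * exp (\<i> * of_real t)))"
    unfolding trace_Mdens_raw rpv using ab sq(1) by (simp add: s1 field_simps)
  also have "\<dots> = of_real ((1 + 2 * sq * cos (x - t)) / (2*pi))"
    unfolding exp_pair q by (simp add: \<alpha>_def \<beta>_def field_simps)
  finally show ?thesis unfolding sq_def \<alpha>_def \<beta>_def .
qed

end

lemma Mdens_cont: "continuous_on UNIV (Mstar_dens n a)"
  unfolding Mstar_dens_def smat_def divide_inverse by (intro continuous_intros)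

lemma trace_scaleR: "trace ((r *\<^sub>R A) ** Y) = r *\<^sub>R trace ((A::cmat) ** Y)"
  by (simp add: trace_def matrix_matrix_mult_def scaleR_sum_right)

lemma trace_bl: "bounded_linear (\<lambda>X::cmat. trace (X ** Y))"
proof -
  have "linear (\<lambda>X::cmat. trace (X ** Y))"
  proof (rule linearI)
    show "trace ((A + B) ** Y) = trace (A ** Y) + trace (B ** Y)" for A B :: cmat
      by (simp add: matrix_add_rdistrib' trace_add)
    show "trace ((r *\<^sub>R A) ** Y) = r *\<^sub>R trace (A ** Y)" for r and A :: cmat
      by (rule trace_scaleR)
  qed
  then show ?thesis by (simp add: linear_conv_bounded_linear)
qed

lemma Mdens_int: "B \<in> sets borel \<Longrightarrow> B \<subseteq> Theta \<Longrightarrow> set_integrable lborel B (Mstar_dens n a)"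
proof -
  assume B: "B \<in> sets borel" "B \<subseteq> Theta"
  have "set_integrable lborel {0..2*pi} (Mstar_dens n a)"
    by (rule borel_integrable_atLeastAtMost') (rule continuous_on_subset[OF Mdens_cont], simp)
  then show ?thesis by (rule set_integrable_subset) (use B in \<open>auto simp: Theta_def\<close>)
qed

lemma Mstar_trace:
  assumes B: "B \<in> sets borel" "B \<subseteq> Theta"
  shows "trace (Mstar n a B ** Y) = (LINT x:B|lborel. trace (Mstar_dens n a x ** Y))"
proof -
  have int: "integrable lborel (\<lambda>x. indicator B x *\<^sub>R Mstar_dens n a x)"
    using Mdens_int[OF B] unfolding set_integrable_def .
  have "trace (Mstar n a B ** Y) = (\<lambda>X. trace (X ** Y)) (integral\<^sup>L lborel (\<lambda>x. indicator B x *\<^sub>R Mstar_dens n a x))"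
    unfolding Mstar_def set_lebesgue_integral_def by simp
  also have "\<dots> = integral\<^sup>L lborel (\<lambda>x. trace ((indicator B x *\<^sub>R Mstar_dens n a x) ** Y))"
    by (rule integral_bounded_linear[OF trace_bl int, symmetric])
  also have "\<dots> = (LINT x:B|lborel. trace (Mstar_dens n a x ** Y))"
    unfolding set_lebesgue_integral_def
    by (intro Bochner_Integration.integral_cong refl) (simp add: trace_scaleR)
  finally show ?thesis .
qed

context covM begin

definition "hf t x = 1 / (2*pi) + 2 * Re \<kappa> * sin (t + x) - 2 * Im \<kappa> * cos (t + x)"

lemma Hf_deriv: "((Hf t) has_real_derivative hf t x) (at x)"
  unfolding Hf_def hf_def by (auto intro!: derivative_eq_intros simp: algebra_simps)

lemma p_ae:
  assumes dens: "is_density n a M p"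
  shows "AE x in lborel. x \<in> Theta \<longrightarrow> p t x = hf t x"
proof (rule ae_from_intervals[where F = "Hf t"])
  show "set_integrable lborel Theta (p t)" using dens unfolding is_density_def by blast
  show "(Hf t has_real_derivative hf t x) (at x)" for x by (rule Hf_deriv)
  fix u v :: real assume uv: "0 \<le> u" "u \<le> v" "v < 2*pi"
  have fi: "set_integrable lborel Theta (p t)" using dens unfolding is_density_def by blast
  have B: "{u..<v} \<in> sets borel" "{u..<v} \<subseteq> Theta" using uv by (auto simp: Theta_def)
  have "trace (M {u..<v} ** rho_t n a t) = complex_of_real (LINT x:{u..<v}|lborel. p t x)"
    using dens B unfolding is_density_def by blast
  then have "(LINT x:{u..<v}|lborel. p t x) = Re (trace (M {u..<v} ** rho_t n a t))" by simp
  also have "\<dots> = Hf t v - Hf t u" by (rule trace_interval) (use uv in auto)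
  finally show "(LINT x:{u..v}|lborel. p t x) = Hf t v - Hf t u"
    using Icc_Ico_integral[OF fi uv] by simp
qed

lemma fisher_p:
  assumes dens: "is_density n a M p" and dd: "diff_density p \<theta>"
  shows "fisher p \<theta> = (\<integral>\<^sup>+ x \<in> Theta. ennreal ((2 * Re \<kappa> * cos (\<theta> + x) + 2 * Im \<kappa> * sin (\<theta> + x))^2 / hf \<theta> x) \<partial>lborel)"
proof (rule fisher_eq[OF p_ae[OF dens] dd])
  fix x
  show "((\<lambda>t. hf t x) has_real_derivative 2 * Re \<kappa> * cos (\<theta> + x) + 2 * Im \<kappa> * sin (\<theta> + x)) (at \<theta>)"
    unfolding hf_def by (auto intro!: derivative_eq_intros simp: algebra_simps)
qed

end

definition "hs R t x = (1 + R * cos (x - t)) / (2*pi)"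
definition "Hs R t x = (x + R * sin (x - t)) / (2*pi)"

lemma Hs_deriv: "((Hs R t) has_vector_derivative hs R t x) (at x within S)"
  unfolding Hs_def hs_def has_real_derivative_iff_has_vector_derivative[symmetric]
  using pi_gt_zero by (auto intro!: derivative_eq_intros simp: field_simps)

lemma hs_int: assumes "u \<le> v" shows "(LINT x:{u..v}|lborel. hs R t x) = Hs R t v - Hs R t u"
  unfolding set_lebesgue_integral_def
  by (rule integral_FTC_atLeastAtMost[OF assms Hs_deriv]) (unfold hs_def, intro continuous_intros, auto)

lemma q_ae:
  assumes un: "norm n = 1" and ua: "norm a = 1"
    and al: "(1 + inner a n)/2 > 0" and be: "(1 - inner a n)/2 > 0"
    and dens: "is_density n a (Mstar n a) q"
  defines "R \<equiv> 2 * sqrt ((1 + inner a n)/2 * ((1 - inner a n)/2))"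
  shows "AE x in lborel. x \<in> Theta \<longrightarrow> q t x = hs R t x"
proof (rule ae_from_intervals[where F = "Hs R t"])
  show "set_integrable lborel Theta (q t)" using dens unfolding is_density_def by blast
  show "(Hs R t has_real_derivative hs R t x) (at x)" for x
    using Hs_deriv[of R t x UNIV] by (simp add: has_real_derivative_iff_has_vector_derivative)
  fix u v :: real assume uv: "0 \<le> u" "u \<le> v" "v < 2*pi"
  have B: "{u..v} \<in> sets borel" "{u..v} \<subseteq> Theta" using uv by (auto simp: Theta_def)
  have "complex_of_real (LINT x:{u..v}|lborel. q t x) = trace (Mstar n a {u..v} ** rho_t n a t)"
    using dens B unfolding is_density_def by metis
  also have "\<dots> = (LINT x:{u..v}|lborel. trace (Mstar_dens n a x ** rho_t n a t))"
    by (rule Mstar_trace[OF B])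
  also have "\<dots> = (LINT x:{u..v}|lborel. complex_of_real (hs R t x))"
    unfolding trace_Mdens[OF un ua al be] hs_def R_def by (simp add: mult.assoc)
  also have "\<dots> = complex_of_real (LINT x:{u..v}|lborel. hs R t x)"
  proof -
    have "(\<lambda>x. indicator {u..v} x *\<^sub>R complex_of_real (hs R t x)) = (\<lambda>x. complex_of_real (indicator {u..v} x *\<^sub>R hs R t x))"
      by (simp add: fun_eq_iff scaleR_conv_of_real)
    then show ?thesis unfolding set_lebesgue_integral_def by (simp only: integral_complex_of_real)
  qed
  finally have "(LINT x:{u..v}|lborel. q t x) = (LINT x:{u..v}|lborel. hs R t x)" by simp
  then show "(LINT x:{u..v}|lborel. q t x) = Hs R t v - Hs R t u" using hs_int[OF uv(2)] by simp
qed

lemma fisher_q: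
  assumes un: "norm n = 1" and ua: "norm a = 1"
    and al: "(1 + inner a n)/2 > 0" and be: "(1 - inner a n)/2 > 0"
    and dens: "is_density n a (Mstar n a) q" and dd: "diff_density q \<theta>"
  defines "R \<equiv> 2 * sqrt ((1 + inner a n)/2 * ((1 - inner a n)/2))"
  shows "fisher q \<theta> = (\<integral>\<^sup>+ x \<in> Theta. ennreal ((R * sin (x - \<theta>) / (2*pi))^2 / hs R \<theta> x) \<partial>lborel)"
proof (rule fisher_eq[OF q_ae[OF un ua al be dens, folded R_def] dd])
  fix x
  show "((\<lambda>t. hs R t x) has_real_derivative R * sin (x - \<theta>) / (2*pi)) (at \<theta>)"
    unfolding hs_def by (auto intro!: derivative_eq_intros simp: algebra_simps)
qed

definition "Gf R y = ((R * sin y) / (2*pi))^2 / ((1 + R * cos y) / (2*pi))"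

lemma Gf_nonneg: assumes "0 \<le> R" "R \<le> 1" shows "Gf R y \<ge> 0"
proof -
  have "1 + R * cos y \<ge> 0"
  proof -
    have "R * cos y \<ge> R * (-1)" using assms by (intro mult_left_mono) auto
    then show ?thesis using assms by simp
  qed
  then show ?thesis unfolding Gf_def by (intro divide_nonneg_nonneg) auto
qed

lemma Gf_mono:
  assumes r: "0 \<le> r" "r \<le> R" "R \<le> 1"
  shows "Gf r y \<le> Gf R y"
proof -
  define c where "c = cos y"
  define s where "s = sin y"
  have sc: "s^2 + c^2 = 1" unfolding s_def c_def by simp
  have c1: "-1 \<le> c" "c \<le> 1" unfolding c_def by auto
  have dr: "1 + r * c \<ge> 0"
  proof -
    have "r * c \<ge> r * (-1)" using r c1 by (intro mult_left_mono) auto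
    then show ?thesis using r by simp
  qed
  have dR: "1 + R * c \<ge> 0"
  proof -
    have "R * c \<ge> R * (-1)" using r c1 by (intro mult_left_mono) auto
    then show ?thesis using r by simp
  qed
  show ?thesis
  proof (cases "1 + r * c = 0")
    case True
    then show ?thesis using Gf_nonneg[of R y] r unfolding Gf_def c_def by simp
  next
    case False
    then have pr: "1 + r * c > 0" using dr by simp
    show ?thesis
    proof (cases "1 + R * c = 0")
      case True
      have "R * c = -1" using True by simp
      moreover have "R * \<bar>c\<bar> \<le> R * 1" using r c1 by (intro mult_left_mono) auto
      moreover have "\<bar>R * c\<bar> = R * \<bar>c\<bar>" using r by (simp add: abs_mult)
      ultimately have "R \<ge> 1" by simp
      then have "R = 1" using r by simp
      then have "c = -1" using \<open>R * c = -1\<close> by simp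
      then have "s = 0" using sc by (simp add: power2_eq_square)
      then show ?thesis using Gf_nonneg[of R y] r unfolding Gf_def s_def by simp
    next
      case False
      then have pR: "1 + R * c > 0" using dR by simp
      have key: "r^2 * (1 + R * c) \<le> R^2 * (1 + r * c)"
      proof -
        have "R^2 * (1 + r * c) - r^2 * (1 + R * c) = (R - r) * (R + r + r * R * c)"
          by (simp add: power2_eq_square algebra_simps)
        moreover have "R + r + r * R * c \<ge> 0"
        proof -
          have "r * R * c \<ge> r * R * (-1)" using r c1 by (intro mult_left_mono) auto
          moreover have "r * R \<le> r" using r by (simp add: mult_left_le)
          ultimately show ?thesis using r by linarith
        qed
        moreover have "(R - r) * (R + r + r * R * c) \<ge> 0" using r \<open>R + r + r * R * c \<ge> 0\<close> by (intro mult_nonneg_nonneg) auto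
        ultimately show ?thesis by linarith
      qed
      have "Gf r y = (r^2 * s^2) / (2*pi * (1 + r * c))"
        unfolding Gf_def s_def c_def using pr by (simp add: power2_eq_square field_simps)
      also have "\<dots> \<le> (R^2 * s^2) / (2*pi * (1 + R * c))"
      proof -
        define D1 where "D1 = 2*pi * (1 + r * c)"
        define D2 where "D2 = 2*pi * (1 + R * c)"
        have D: "D1 > 0" "D2 > 0" using pr pR unfolding D1_def D2_def by auto
        have "r^2 * s^2 * D2 \<le> R^2 * s^2 * D1"
        proof -
          have "s^2 * (2 * pi) \<ge> 0" by simp
          from mult_right_mono[OF key this] show ?thesis unfolding D1_def D2_def by (simp add: algebra_simps)
        qed
        then have "(r^2 * s^2 * D2) / (D1 * D2) \<le> (R^2 * s^2 * D1) / (D1 * D2)"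
          using D by (intro divide_right_mono) auto
        also have "(r^2 * s^2 * D2) / (D1 * D2) = (r^2 * s^2) / D1" using D by simp
        also have "(R^2 * s^2 * D1) / (D1 * D2) = (R^2 * s^2) / D2" using D by simp
        finally show ?thesis unfolding D1_def D2_def .
      qed
      also have "\<dots> = Gf R y"
        unfolding Gf_def s_def c_def using pR by (simp add: power2_eq_square field_simps)
      finally show ?thesis .
    qed
  qed
qed

lemma Gf_meas: "(\<lambda>y. ennreal (Gf R y)) \<in> borel_measurable borel"
  unfolding Gf_def by measurable

lemma Gf_per: "ennreal (Gf R (y + 2*pi)) = ennreal (Gf R y)"
  unfolding Gf_def by simp

lemma Gf_shift: "(\<integral>\<^sup>+x\<in>Theta. ennreal (Gf R (x + s)) \<partial>lborel) = (\<integral>\<^sup>+x\<in>Theta. ennreal (Gf R x) \<partial>lborel)"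
  using shift_int[of "\<lambda>y. ennreal (Gf R y)" s, OF Gf_meas Gf_per] by simp

theorem theorem4:
  fixes n a :: "real^3" and \<theta> :: real
    and M :: "real set \<Rightarrow> complex^2^2"
    and p q :: "real \<Rightarrow> real \<Rightarrow> real"
  assumes "norm n = 1" and "norm a = 1"
    and "inner a n \<noteq> 1" and "inner a n \<noteq> -1"
    and "\<theta> \<in> Theta"
    and "is_povm M" and "covariant n M"
    and "is_density n a M p" and "diff_density p \<theta>"
    and "is_density n a (Mstar n a) q" and "diff_density q \<theta>"
  shows "fisher p \<theta> \<le> fisher q \<theta>"
proof -
  note un = assms(1) and ua = assms(2)
  interpret covM n a M using assms by unfold_locales auto
  have cabs: "\<bar>inner a n\<bar> \<le> 1" using Cauchy_Schwarz_ineq2[of a n] un ua by simp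
  define \<alpha> where "\<alpha> = (1 + inner a n)/2"
  define \<beta> where "\<beta> = (1 - inner a n)/2"
  have al: "\<alpha> > 0" and be: "\<beta> > 0" using cabs assms(3,4) unfolding \<alpha>_def \<beta>_def by auto
  define Rs where "Rs = 2 * sqrt (\<alpha> * \<beta>)"
  define r where "r = 4 * pi * cmod \<kappa>"
  have r0: "r \<ge> 0" unfolding r_def by simp
  have Rs0: "Rs \<ge> 0" unfolding Rs_def using al be by simp
  have Rs2: "Rs^2 = 4 * (\<alpha> * \<beta>)" unfolding Rs_def using al be by (simp add: power_mult_distrib)
  have rRs: "r \<le> Rs"
  proof -
    have "(cmod \<kappa>)^2 * (4 * pi^2) \<le> \<alpha> * \<beta>" using kappa_bound unfolding \<alpha>_def \<beta>_def .
    then have "r^2 \<le> Rs^2" unfolding Rs2 r_def by (simp add: power_mult_distrib power2_eq_square algebra_simps)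
    then show ?thesis using Rs0 by (rule power2_le_imp_le)
  qed
  have Rs1: "Rs \<le> 1"
  proof -
    have "\<alpha> * \<beta> \<le> 1/4" unfolding \<alpha>_def \<beta>_def by (simp add: field_simps power2_eq_square[symmetric])
    then have "sqrt (\<alpha> * \<beta>) \<le> sqrt (1/4)" by (rule real_sqrt_le_mono)
    also have "sqrt (1/4) = (1/2::real)" by (simp add: real_sqrt_divide)
    finally show ?thesis unfolding Rs_def by simp
  qed
  obtain \<phi> where phi: "4 * pi * Re \<kappa> = r * sin \<phi>" "- 4 * pi * Im \<kappa> = r * cos \<phi>"
  proof (cases "r = 0")
    case True
    then have "\<kappa> = 0" unfolding r_def by simp
    then show ?thesis using that[of 0] True by simp
  next
    case False
    then have rp: "r > 0" using r0 by simp
    have cm: "(cmod \<kappa>)^2 = (Re \<kappa>)^2 + (Im \<kappa>)^2" by (rule cmod_power2)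
    have nz: "(Im \<kappa>)^2 + (Re \<kappa>)^2 \<noteq> 0" using rp cm unfolding r_def by auto
    have r2: "r^2 = (4*pi)^2 * ((Im \<kappa>)^2 + (Re \<kappa>)^2)" unfolding r_def by (simp add: power_mult_distrib cm)
    have "(- 4 * pi * Im \<kappa> / r)^2 + (4 * pi * Re \<kappa> / r)^2 = (4*pi)^2 * ((Im \<kappa>)^2 + (Re \<kappa>)^2) / r^2"
      using rp by (simp add: power2_eq_square field_simps)
    also have "\<dots> = 1" unfolding r2[symmetric] using rp by simp
    finally have "(- 4 * pi * Im \<kappa> / r)^2 + (4 * pi * Re \<kappa> / r)^2 = 1" .
    then obtain t where "- 4 * pi * Im \<kappa> / r = cos t" "4 * pi * Re \<kappa> / r = sin t" by (rule sincos_total_2pi)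
    then show ?thesis using that[of t] rp by (simp add: field_simps)
  qed
  have "fisher p \<theta> = (\<integral>\<^sup>+ x \<in> Theta. ennreal ((2 * Re \<kappa> * cos (\<theta> + x) + 2 * Im \<kappa> * sin (\<theta> + x))^2 / hf \<theta> x) \<partial>lborel)"
    by (rule fisher_p[OF assms(8,9)])
  also have "\<dots> = (\<integral>\<^sup>+ x \<in> Theta. ennreal (Gf r (x + (\<theta> - \<phi>))) \<partial>lborel)"
  proof (intro nn_integral_cong arg_cong2[where f="(*)"] refl arg_cong[where f=ennreal])
    fix x
    define y where "y = \<theta> + x"
    have k1: "2 * Re \<kappa> = r * sin \<phi> / (2*pi)" using phi(1) by (simp add: field_simps)
    have k2: "2 * Im \<kappa> = - (r * cos \<phi>) / (2*pi)" using phi(2) by (simp add: field_simps)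
    have num: "2 * Re \<kappa> * cos y + 2 * Im \<kappa> * sin y = - (r * sin (y - \<phi>) / (2*pi))"
      unfolding k1 k2 sin_diff by (simp add: field_simps)
    have den: "hf \<theta> x = (1 + r * cos (y - \<phi>)) / (2*pi)"
      unfolding hf_def y_def[symmetric] cos_diff by (simp add: k1[symmetric] k2[symmetric] add_divide_distrib) (simp add: k1 k2 field_simps)
    have eqy: "x + (\<theta> - \<phi>) = y - \<phi>" unfolding y_def by simp
    show "(2 * Re \<kappa> * cos (\<theta> + x) + 2 * Im \<kappa> * sin (\<theta> + x))^2 / hf \<theta> x = Gf r (x + (\<theta> - \<phi>))"
      unfolding Gf_def y_def[symmetric] num den eqy by simp
  qed
  also have "\<dots> = (\<integral>\<^sup>+ x \<in> Theta. ennreal (Gf r x) \<partial>lborel)" by (rule Gf_shift)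
  also have "\<dots> \<le> (\<integral>\<^sup>+ x \<in> Theta. ennreal (Gf Rs x) \<partial>lborel)"
    by (intro nn_integral_mono mult_right_mono ennreal_leI Gf_mono r0 rRs Rs1) simp
  also have "\<dots> = (\<integral>\<^sup>+ x \<in> Theta. ennreal (Gf Rs (x + (- \<theta>))) \<partial>lborel)" by (rule Gf_shift[symmetric])
  also have "\<dots> = fisher q \<theta>"
  proof -
    have "fisher q \<theta> = (\<integral>\<^sup>+ x \<in> Theta. ennreal ((Rs * sin (x - \<theta>) / (2*pi))^2 / hs Rs \<theta> x) \<partial>lborel)"
      unfolding Rs_def \<alpha>_def \<beta>_def
      by (rule fisher_q[OF un ua al[unfolded \<alpha>_def] be[unfolded \<beta>_def] assms(10,11)])
    also have "\<dots> = (\<integral>\<^sup>+ x \<in> Theta. ennreal (Gf Rs (x + (- \<theta>))) \<partial>lborel)"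
      by (simp add: Gf_def hs_def)
    finally show ?thesis by simp
  qed
  finally show ?thesis .
qed

end
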